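(* There is a sequence $q_n$ of (Schwartz-class) solutions of $i\partial_t q + \partial_x^2 q + i\partial_x(|q|^2 q)=0$ such that \[ \int_{\mathbb{R}}|q_n(t,x)|^2\,dx = 2\pi \text{ for all } n,t \qquad\text{but}\qquad \int_{-1}^{1}\bigl\|\operatorname{sech}^{12}(x)\,q_n(t,x)\bigr\|_{H^{1/2}_x}^2\,dt\longrightarrow\infty. \]
   Context: $\|f\|_{H^{1/2}}^2=\int(4+\xi^2)^{1/2}|\hat f(\xi)|^2\,d\xi$. *)

theory Defs
  imports "HOL-Analysis.Analysis"
begin

definition schwartz :: "(real \<Rightarrow> complex) \<Rightarrow> bool" where
  "schwartz f \<longleftrightarrow> (\<exists>D :: nat \<Rightarrow> real \<Rightarrow> complex.
      D 0 = f \<and>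
      (\<forall>k x. (D k has_vector_derivative D (Suc k) x) (at x)) \<and>
      (\<forall>j k. bounded (range (\<lambda>x. complex_of_real (x ^ j) * D k x))))"

definition fourier :: "(real \<Rightarrow> complex) \<Rightarrow> real \<Rightarrow> complex" where
  "fourier f \<xi> = complex_of_real (1 / sqrt (2 * pi)) *
      (LINT x|lborel. cis (- (x * \<xi>)) * f x)"

definition H_half_norm_sq :: "(real \<Rightarrow> complex) \<Rightarrow> real" where
  "H_half_norm_sq f = (LINT \<xi>|lborel. sqrt (4 + \<xi>\<^sup>2) * (cmod (fourier f \<xi>))\<^sup>2)"

definition sech :: "real \<Rightarrow> real" where
  "sech x = 1 / cosh x"

definition dnls_schwartz_solution :: "(real \<Rightarrow> real \<Rightarrow> complex) \<Rightarrow> bool" where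
  "dnls_schwartz_solution q \<longleftrightarrow>
     (\<forall>t. schwartz (q t)) \<and>
     (\<exists>qt qx qxx :: real \<Rightarrow> real \<Rightarrow> complex.
        (\<forall>t x. ((\<lambda>s. q s x) has_vector_derivative qt t x) (at t)) \<and>
        (\<forall>t x. ((\<lambda>y. q t y) has_vector_derivative qx t x) (at x)) \<and>
        (\<forall>t x. ((\<lambda>y. qx t y) has_vector_derivative qxx t x) (at x)) \<and>
        continuous_on UNIV (\<lambda>p. q (fst p) (snd p)) \<and>
        continuous_on UNIV (\<lambda>p. qt (fst p) (snd p)) \<and>
        continuous_on UNIV (\<lambda>p. qx (fst p) (snd p)) \<and>
        continuous_on UNIV (\<lambda>p. qxx (fst p) (snd p)) \<and>
        (\<forall>t x. \<i> * qt t x + qxx t x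
               + \<i> * vector_derivative
                      (\<lambda>y. complex_of_real ((cmod (q t y))\<^sup>2) * q t y) (at x) = 0))"

end

theory Submission
  imports Defs "HOL-Probability.Probability" "HOL-Real_Asymp.Real_Asymp"
begin

lemma sech_pos: "sech x > 0" by (simp add: sech_def)
lemma sech_le1: "sech x \<le> 1" by (simp add: sech_def cosh_real_ge_1)
lemma tanh_abs_le1: "\<bar>tanh (x::real)\<bar> \<le> 1"
  using tanh_real_bounds[of x] by auto
lemma sech_tanh_sq: "tanh x ^ 2 + sech x ^ 2 = 1"
proof -
  have c: "cosh x ^ 2 \<noteq> 0" using cosh_real_pos[of x] by simp
  have "tanh x ^ 2 + sech x ^ 2 = (sinh x ^ 2 + 1) / cosh x ^ 2"
    by (simp add: tanh_def sech_def power_divide add_divide_distrib)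
  also have "\<dots> = 1" using c by (simp add: cosh_square_eq)
  finally show ?thesis .
qed

lemma DERIV_sech: "((\<lambda>x. sech (c*x)) has_real_derivative (- c * tanh (c*x) * sech (c*x))) (at x)"
proof -
  have "cosh (c*x) \<noteq> 0" using cosh_real_pos[of "c*x"] by linarith
  then show ?thesis unfolding sech_def tanh_def
    by (auto intro!: derivative_eq_intros simp: power2_eq_square field_simps)
qed

lemma DERIV_tanh_c: "((\<lambda>x. tanh (c*x)) has_real_derivative (c * sech (c*x)^2)) (at x)"
proof -
  have "cosh (c*x) \<noteq> 0" using cosh_real_pos[of "c*x"] by linarith
  then have "((\<lambda>x. tanh (c*x)) has_real_derivative ((1 - tanh (c*x)^2) * c)) (at x)"
    by (auto intro!: derivative_eq_intros)
  moreover have "(1 - tanh (c*x)^2) * c = c * sech (c*x)^2" using sech_tanh_sq[of "c*x"] by algebra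
  ultimately show ?thesis by simp
qed

inductive_set PC :: "(real \<Rightarrow> complex) set" where
  PC_const: "(\<lambda>x. c) \<in> PC"
| PC_tanh: "(\<lambda>x. complex_of_real (tanh (c*x))) \<in> PC"
| PC_sech: "(\<lambda>x. complex_of_real (sech (c*x))) \<in> PC"
| PC_add: "f \<in> PC \<Longrightarrow> g \<in> PC \<Longrightarrow> (\<lambda>x. f x + g x) \<in> PC"
| PC_mult: "f \<in> PC \<Longrightarrow> g \<in> PC \<Longrightarrow> (\<lambda>x. f x * g x) \<in> PC"

lemma PC_deriv: "f \<in> PC \<Longrightarrow> \<exists>f'\<in>PC. \<forall>x. (f has_vector_derivative f' x) (at x)"
proof (induction rule: PC.induct)
  case (PC_const c)
  show ?case by (rule bexI[of _ "\<lambda>x. 0"]) (auto intro: PC.PC_const)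
next
  case (PC_tanh c)
  have "(\<lambda>x. complex_of_real c * (complex_of_real (sech (c*x)) * complex_of_real (sech (c*x)))) \<in> PC"
    by (rule PC.PC_mult[OF PC.PC_const[of "complex_of_real c"] PC.PC_mult[OF PC.PC_sech[of c] PC.PC_sech[of c]]])
  then show ?case
    by (intro bexI[of _ "\<lambda>x. complex_of_real c * (complex_of_real (sech (c*x)) * complex_of_real (sech (c*x)))"])
       (auto intro!: has_vector_derivative_of_real[OF DERIV_tanh_c, THEN has_vector_derivative_eq_rhs]
         simp: power2_eq_square)
next
  case (PC_sech c)
  have "(\<lambda>x. complex_of_real (-c) * (complex_of_real (tanh (c*x)) * complex_of_real (sech (c*x)))) \<in> PC"
    by (rule PC.PC_mult[OF PC.PC_const[of "complex_of_real (-c)"] PC.PC_mult[OF PC.PC_tanh[of c] PC.PC_sech[of c]]])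
  then show ?case
    by (intro bexI[of _ "\<lambda>x. complex_of_real (-c) * (complex_of_real (tanh (c*x)) * complex_of_real (sech (c*x)))"])
       (auto intro!: has_vector_derivative_of_real[OF DERIV_sech, THEN has_vector_derivative_eq_rhs] intro: PC.intros)
next
  case (PC_add f g)
  then obtain f' g' where "f'\<in>PC" "g'\<in>PC" "\<forall>x. (f has_vector_derivative f' x) (at x)"
     "\<forall>x. (g has_vector_derivative g' x) (at x)" by blast
  then show ?case by (intro bexI[of _ "\<lambda>x. f' x + g' x"]) (auto intro!: PC.intros derivative_eq_intros)
next
  case (PC_mult f g)
  then obtain f' g' where "f'\<in>PC" "g'\<in>PC" "\<forall>x. (f has_vector_derivative f' x) (at x)"
     "\<forall>x. (g has_vector_derivative g' x) (at x)" by blast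
  then show ?case by (intro bexI[of _ "\<lambda>x. f x * g' x + f' x * g x"])
      (auto intro!: PC.intros derivative_eq_intros PC_mult)
qed

lemma PC_bounded: "f \<in> PC \<Longrightarrow> \<exists>M. \<forall>x. cmod (f x) \<le> M"
proof (induction rule: PC.induct)
  case (PC_const c) then show ?case by auto
next
  case (PC_tanh c) show ?case by (rule exI[of _ 1]) (simp add: tanh_abs_le1)
next
  case (PC_sech c) show ?case by (rule exI[of _ 1]) (simp add: sech_le1 abs_of_pos sech_pos less_imp_le)
next
  case (PC_add f g)
  then obtain A B where "\<forall>x. cmod (f x) \<le> A" "\<forall>x. cmod (g x) \<le> B" by blast
  then show ?case by (intro exI[of _ "A+B"]) (metis add_mono norm_triangle_le)
next
  case (PC_mult f g)
  then obtain A B where "\<forall>x. cmod (f x) \<le> A" "\<forall>x. cmod (g x) \<le> B" by blast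
  then show ?case by (intro exI[of _ "A*B"]) (auto simp: norm_mult intro!: mult_mono order_trans[OF norm_ge_zero])
qed

lemma PC_cont: "f \<in> PC \<Longrightarrow> continuous_on UNIV f"
  using PC_deriv by (meson continuous_on_vector_derivative has_vector_derivative_at_within)

lemma PC_pow: "f \<in> PC \<Longrightarrow> (\<lambda>x. f x ^ n) \<in> PC"
  by (induction n) (auto intro: PC.intros)


definition uu :: "real \<Rightarrow> real \<Rightarrow> real" where
  "uu b x = sqrt (2*b) * sqrt (sech (b*x))"
definition th :: "real \<Rightarrow> real \<Rightarrow> real" where
  "th b x = -3 * arctan (exp (b*x))"
definition sol :: "real \<Rightarrow> real \<Rightarrow> real \<Rightarrow> complex" where
  "sol b t x = complex_of_real (uu b x) * exp (\<i> * complex_of_real (b^2/4 * t + th b x))"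
definition mm :: "real \<Rightarrow> real \<Rightarrow> complex" where
  "mm b x = complex_of_real (-(b/2) * tanh (b*x)) - \<i> * complex_of_real (3*b/2 * sech (b*x))"
definition mm' :: "real \<Rightarrow> real \<Rightarrow> complex" where
  "mm' b x = complex_of_real (-(b/2) * (b * sech (b*x)^2)) - \<i> * complex_of_real (3*b/2 * (- b * tanh (b*x) * sech (b*x)))"

lemma DERIV_uu: "(uu b has_real_derivative (-(b/2) * tanh (b*x) * uu b x)) (at x)"
proof -
  have s: "sech (b*x) > 0" by (rule sech_pos)
  have d: "((\<lambda>x. sqrt (sech (b*x))) has_real_derivative (inverse (sqrt (sech (b*x))) / 2 * (- b * tanh (b*x) * sech (b*x)))) (at x)"
    by (rule DERIV_chain2[OF DERIV_real_sqrt DERIV_sech]) (use s in auto)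
  have eq: "inverse (sqrt (sech (b*x))) / 2 * (- b * tanh (b*x) * sech (b*x)) = -(b/2) * tanh (b*x) * sqrt (sech (b*x))"
  proof -
    have "sech (b*x) = sqrt (sech (b*x)) * sqrt (sech (b*x))" using s by simp
    then show ?thesis using s by (simp add: field_simps)
  qed
  have "((\<lambda>x. sqrt (sech (b*x))) has_real_derivative (-(b/2) * tanh (b*x) * sqrt (sech (b*x)))) (at x)" 
    using d unfolding eq .
  then have "((\<lambda>x. sqrt (2*b) * sqrt (sech (b*x))) has_real_derivative sqrt (2*b) * (-(b/2) * tanh (b*x) * sqrt (sech (b*x)))) (at x)"
    by (rule DERIV_cmult)
  then show ?thesis unfolding uu_def[abs_def] by (simp add: algebra_simps)
qed

lemma DERIV_th: "(th b has_real_derivative (-(3*b/2) * sech (b*x))) (at x)"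
proof -
  have d: "(th b has_real_derivative (-3 * (inverse (1 + (exp (b*x))^2) * (exp (b*x) * b)))) (at x)"
    unfolding th_def[abs_def] by (auto intro!: derivative_eq_intros)
  have eq: "-3 * (inverse (1 + (exp (b*x))^2) * (exp (b*x) * b)) = -(3*b/2) * sech (b*x)"
  proof -
    have e: "exp (b*x) * exp (-(b*x)) = 1" by (simp add: exp_minus)
    have p: "1 + (exp (b*x))^2 > 0" "exp (b*x) + exp (-(b*x)) > 0" by (auto intro: add_pos_pos)
    have h: "inverse (1 + (exp (b*x))^2) * exp (b*x) = 1 / (exp (b*x) + exp (-(b*x)))"
      using p e by (simp add: field_simps power2_eq_square)
    have "-3 * (inverse (1 + (exp (b*x))^2) * (exp (b*x) * b)) = -3 * b * (inverse (1 + (exp (b*x))^2) * exp (b*x))"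
      by simp
    also have "\<dots> = -(3*b/2) * sech (b*x)" unfolding h sech_def cosh_field_def by simp
    finally show ?thesis .
  qed
  show ?thesis using d unfolding eq .
qed


lemma expi_deriv:
  assumes "(f has_real_derivative f') (at x)"
  shows "((\<lambda>x. exp (\<i> * complex_of_real (f x))) has_vector_derivative (\<i> * complex_of_real f' * exp (\<i> * complex_of_real (f x)))) (at x)"
proof -
  have F: "((\<lambda>x. complex_of_real (f x)) has_vector_derivative complex_of_real f') (at x)"
    using assms by (rule has_vector_derivative_of_real)
  have G: "((\<lambda>z. exp (\<i> * z)) has_field_derivative (\<i> * exp (\<i> * complex_of_real (f x)))) (at (complex_of_real (f x)))"
    by (auto intro!: derivative_eq_intros)
  from field_vector_diff_chain_at[OF F G] show ?thesis by (simp add: o_def mult.assoc mult.commute mult.left_commute)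
qed

lemma sol_dx: "((\<lambda>y. sol b t y) has_vector_derivative mm b x * sol b t x) (at x)"
proof -
  have "((\<lambda>y. complex_of_real (uu b y) * exp (\<i> * complex_of_real (b^2/4 * t + th b y))) has_vector_derivative
     (complex_of_real (uu b x) * (\<i> * complex_of_real (-(3*b/2) * sech (b*x)) * exp (\<i> * complex_of_real (b^2/4 * t + th b x)))
      + complex_of_real (-(b/2) * tanh (b*x) * uu b x) * exp (\<i> * complex_of_real (b^2/4 * t + th b x)))) (at x)"
    by (intro has_vector_derivative_mult has_vector_derivative_of_real DERIV_uu expi_deriv)
       (auto intro!: derivative_eq_intros DERIV_th[THEN DERIV_cong])
  then show ?thesis unfolding sol_def[abs_def] mm_def by (simp add: algebra_simps)
qed

lemma sol_dt: "((\<lambda>s. sol b s x) has_vector_derivative \<i> * complex_of_real (b^2/4) * sol b t x) (at t)"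
proof -
  have "((\<lambda>s. complex_of_real (uu b x) * exp (\<i> * complex_of_real (b^2/4 * s + th b x))) has_vector_derivative
     complex_of_real (uu b x) * (\<i> * complex_of_real (b^2/4) * exp (\<i> * complex_of_real (b^2/4 * t + th b x)))) (at t)"
    by (intro has_vector_derivative_mult_right expi_deriv) (auto intro!: derivative_eq_intros)
  then show ?thesis unfolding sol_def[abs_def] by (simp add: algebra_simps)
qed

lemma mm_deriv: "(mm b has_vector_derivative mm' b x) (at x)"
  unfolding mm_def[abs_def] mm'_def
  by (intro has_vector_derivative_diff has_vector_derivative_mult_right has_vector_derivative_of_real
      DERIV_cmult DERIV_tanh_c[THEN DERIV_cong] DERIV_sech[THEN DERIV_cong]) auto

lemma sol_dxx: "((\<lambda>y. mm b y * sol b t y) has_vector_derivative (mm' b x + mm b x ^ 2) * sol b t x) (at x)"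
proof -
  have "((\<lambda>y. mm b y * sol b t y) has_vector_derivative (mm b x * (mm b x * sol b t x) + mm' b x * sol b t x)) (at x)"
    by (intro has_vector_derivative_mult mm_deriv sol_dx)
  then show ?thesis by (simp add: algebra_simps power2_eq_square)
qed

lemma uu_nonneg: "b \<ge> 0 \<Longrightarrow> uu b x \<ge> 0" by (simp add: uu_def sech_pos less_imp_le)
lemma uu_sq: "b \<ge> 0 \<Longrightarrow> uu b x ^ 2 = 2*b* sech (b*x)"
  by (simp add: uu_def power_mult_distrib sech_pos less_imp_le)

lemma cmod_sol: "b \<ge> 0 \<Longrightarrow> cmod (sol b t x) = uu b x"
  by (simp add: sol_def norm_mult uu_nonneg)

lemma cmod_sol_sq: "b \<ge> 0 \<Longrightarrow> cmod (sol b t x) ^ 2 = 2*b* sech (b*x)"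
  by (simp add: cmod_sol uu_sq)

lemma nonlin_deriv:
  assumes "b \<ge> 0"
  shows "((\<lambda>y. complex_of_real ((cmod (sol b t y))\<^sup>2) * sol b t y) has_vector_derivative
     (complex_of_real (2*b*(- b * tanh (b*x) * sech (b*x))) + complex_of_real (2*b* sech (b*x)) * mm b x) * sol b t x) (at x)"
proof -
  have "((\<lambda>y. complex_of_real (2*b* sech (b*y)) * sol b t y) has_vector_derivative
     (complex_of_real (2*b* sech (b*x)) * (mm b x * sol b t x) + complex_of_real (2*b*(- b * tanh (b*x) * sech (b*x))) * sol b t x)) (at x)"
    by (intro has_vector_derivative_mult sol_dx has_vector_derivative_of_real DERIV_cmult DERIV_sech)
  then show ?thesis using assms by (simp add: cmod_sol_sq algebra_simps)
qed

lemma pde_identity: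
  "\<i> * (\<i> * complex_of_real (b^2/4)) + (mm' b x + mm b x ^ 2)
   + \<i> * (complex_of_real (2*b*(- b * tanh (b*x) * sech (b*x))) + complex_of_real (2*b* sech (b*x)) * mm b x) = 0"
proof -
  define T where "T = tanh (b*x)"
  define S where "S = sech (b*x)"
  have TS: "T^2 + S^2 = 1" unfolding T_def S_def by (rule sech_tanh_sq)
  have "\<i> * (\<i> * complex_of_real (b^2/4)) + (mm' b x + mm b x ^ 2)
   + \<i> * (complex_of_real (2*b*(- b * tanh (b*x) * sech (b*x))) + complex_of_real (2*b* sech (b*x)) * mm b x)
   = complex_of_real (b^2/4 * (T^2 + S^2 - 1))"
    unfolding mm_def mm'_def T_def[symmetric] S_def[symmetric]
    by (simp add: complex_eq_iff power2_eq_square algebra_simps)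
  also have "\<dots> = 0" using TS by simp
  finally show ?thesis .
qed

lemma pow_le_exp: assumes "y \<ge> 0" shows "y^j \<le> real j ^ j * exp y"
proof (cases "j = 0")
  case True then show ?thesis using assms by simp
next
  case False
  then have j: "real j > 0" by simp
  have "(y / real j) ^ j \<le> (1 + y / real j) ^ j" using assms j by (intro power_mono) auto
  also have "\<dots> \<le> exp y" using exp_ge_one_plus_x_over_n_power_n[of j y] assms False by simp
  finally have "(y / real j) ^ j \<le> exp y" .
  then have "y ^ j / real j ^ j \<le> exp y" by (simp add: power_divide)
  then show ?thesis using j by (simp add: field_simps)
qed

lemma sech_le_exp: "sech y \<le> 2 * exp (- \<bar>y\<bar>)"
proof -
  have e2: "2 * cosh y = exp y + exp (-y)" by (simp add: cosh_field_def)
  have "exp \<bar>y\<bar> = exp y \<or> exp \<bar>y\<bar> = exp (-y)" by (cases "y \<ge> 0") auto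
  moreover have "exp y > 0" "exp (-y) > 0" by auto
  ultimately have "exp \<bar>y\<bar> \<le> 2 * cosh y" unfolding e2 by linarith
  then have "2 / (2 * cosh y) \<le> 2 / exp \<bar>y\<bar>" by (intro divide_left_mono) auto
  moreover have "sech y = 2 / (2 * cosh y)" by (simp add: sech_def)
  moreover have "2 * exp (- \<bar>y\<bar>) = 2 / exp \<bar>y\<bar>" by (simp add: exp_minus divide_inverse)
  ultimately show ?thesis by simp
qed

lemma poly_sech_bound: assumes "c > 0" shows "\<bar>x\<bar>^j * sech (c*x) \<le> 2 * (real j / c)^j"
proof -
  have "\<bar>x\<bar>^j = (c*\<bar>x\<bar>)^j / c^j" using assms by (simp add: power_mult_distrib)
  also have "\<dots> \<le> real j ^ j * exp (c*\<bar>x\<bar>) / c^j"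
    using assms by (intro divide_right_mono pow_le_exp) auto
  finally have a: "\<bar>x\<bar>^j \<le> real j ^ j * exp (c*\<bar>x\<bar>) / c^j" .
  have b: "sech (c*x) \<le> 2 * exp (- (c*\<bar>x\<bar>))" using sech_le_exp[of "c*x"] assms by (simp add: abs_mult)
  have "\<bar>x\<bar>^j * sech (c*x) \<le> (real j ^ j * exp (c*\<bar>x\<bar>) / c^j) * (2 * exp (- (c*\<bar>x\<bar>)))"
    using a b assms by (intro mult_mono) (auto simp: sech_pos less_imp_le intro!: divide_nonneg_pos)
  also have "\<dots> = 2 * (real j ^ j / c^j) * (exp (c*\<bar>x\<bar>) * exp (- (c*\<bar>x\<bar>)))" by (simp add: mult_ac)
  also have "\<dots> = 2 * (real j / c)^j" by (simp add: exp_minus power_divide)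
  finally show ?thesis .
qed

lemma sqrt_sech_le: "sqrt (sech y) \<le> sech (y/2)"
proof -
  have c2: "cosh y = 2 * cosh (y/2)^2 - 1" using cosh_double_cosh[of "y/2"] by simp
  have p: "cosh (y/2) > 0" "cosh y > 0" by auto
  have "1 \<le> cosh (y/2)^2" using cosh_real_ge_1[of "y/2"] by (simp add: one_le_power)
  then have "cosh (y/2)^2 \<le> cosh y" using c2 by linarith
  then have "1 / cosh y \<le> 1 / cosh (y/2)^2" using p by (intro divide_left_mono) auto
  then have "sech (y/2)^2 \<ge> sech y" by (simp add: sech_def power_divide)
  then have "sqrt (sech y) \<le> sqrt (sech (y/2)^2)" by (rule real_sqrt_le_mono)
  then show ?thesis using sech_pos[of "y/2"] by simp
qed

lemma tower:
  assumes B: "\<And>x. (B has_vector_derivative m x * B x) (at x)" and m: "m \<in> PC" and h: "h \<in> PC"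
  shows "\<exists>D. D 0 = (\<lambda>x. h x * B x) \<and> (\<forall>k x. (D k has_vector_derivative D (Suc k) x) (at x))
             \<and> (\<forall>k. \<exists>g\<in>PC. D k = (\<lambda>x. g x * B x))"
proof -
  define nx where "nx g = (SOME g'. g' \<in> PC \<and> (\<forall>x. (g has_vector_derivative g' x) (at x)))" for g
  have nx: "nx g \<in> PC \<and> (\<forall>x. (g has_vector_derivative nx g x) (at x))" if "g \<in> PC" for g
  proof -
    have "\<exists>g'. g' \<in> PC \<and> (\<forall>x. (g has_vector_derivative g' x) (at x))" using PC_deriv[OF that] by blast
    then show ?thesis unfolding nx_def by (rule someI_ex)
  qed
  define G where "G k = ((\<lambda>g. \<lambda>x. nx g x + g x * m x) ^^ k) h" for k
  have G0: "G 0 = h" by (simp add: G_def)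
  have GS: "G (Suc k) = (\<lambda>x. nx (G k) x + G k x * m x)" for k by (simp add: G_def)
  have GP: "G k \<in> PC" for k
    by (induction k) (auto simp: G0 GS h m nx intro!: PC.intros)
  define D where "D k = (\<lambda>x. G k x * B x)" for k
  have "(D k has_vector_derivative D (Suc k) x) (at x)" for k x
  proof -
    have "(D k has_vector_derivative (G k x * (m x * B x) + nx (G k) x * B x)) (at x)"
      unfolding D_def using nx[OF GP[of k]] B by (auto intro!: has_vector_derivative_mult)
    then show ?thesis unfolding D_def GS by (simp add: algebra_simps)
  qed
  then show ?thesis using GP by (intro exI[of _ D]) (auto simp: D_def G0)
qed

lemma schwartz_tower:
  assumes B: "\<And>x. (B has_vector_derivative m x * B x) (at x)" and m: "m \<in> PC" and h: "h \<in> PC"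
    and Bb: "\<And>x. cmod (B x) \<le> K * sech (c*x)" and c: "c > 0"
  shows "schwartz (\<lambda>x. h x * B x)"
proof -
  obtain D where D: "D 0 = (\<lambda>x. h x * B x)" "\<forall>k x. (D k has_vector_derivative D (Suc k) x) (at x)"
    "\<forall>k. \<exists>g\<in>PC. D k = (\<lambda>x. g x * B x)" using tower[OF B m h] by blast
  have "bounded (range (\<lambda>x. complex_of_real (x ^ j) * D k x))" for j k
  proof -
    obtain g where g: "g \<in> PC" "D k = (\<lambda>x. g x * B x)" using D(3) by blast
    obtain M where M: "\<forall>x. cmod (g x) \<le> M" using PC_bounded[OF g(1)] by blast
    have K: "K \<ge> 0"
    proof -
      have "0 \<le> K * sech (c*0)" using Bb[of 0] norm_ge_zero[of "B 0"] by linarith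
      then show ?thesis by (simp add: sech_def)
    qed
    have M0: "M \<ge> 0" using M norm_ge_zero[of "g 0"] by (meson order_trans)
    have "cmod (complex_of_real (x ^ j) * D k x) \<le> M * K * (2 * (real j / c)^j)" for x
    proof -
      have "cmod (complex_of_real (x ^ j) * D k x) = \<bar>x\<bar>^j * (cmod (g x) * cmod (B x))"
        by (simp add: g norm_mult norm_power)
      also have "\<dots> \<le> \<bar>x\<bar>^j * (M * (K * sech (c*x)))"
        by (rule mult_left_mono[OF mult_mono[OF M[rule_format] Bb]]) (simp_all add: M0)
      also have "\<dots> = M * K * (\<bar>x\<bar>^j * sech (c*x))" by simp
      also have "\<dots> \<le> M * K * (2 * (real j / c)^j)"
        by (rule mult_left_mono[OF poly_sech_bound[OF c]]) (simp add: M0 K)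
      finally show ?thesis .
    qed
    then show ?thesis unfolding bounded_iff by blast
  qed
  then show ?thesis unfolding schwartz_def using D by blast
qed

lemma mm_PC: "mm b \<in> PC"
proof -
  have "(\<lambda>x. complex_of_real (-(b/2)) * complex_of_real (tanh (b*x)) + (- \<i> * complex_of_real (3*b/2)) * complex_of_real (sech (b*x))) \<in> PC"
    by (rule PC.PC_add[OF PC.PC_mult[OF PC.PC_const PC.PC_tanh] PC.PC_mult[OF PC.PC_const PC.PC_sech]])
  moreover have "mm b = (\<lambda>x. complex_of_real (-(b/2)) * complex_of_real (tanh (b*x)) + (- \<i> * complex_of_real (3*b/2)) * complex_of_real (sech (b*x)))"
    by (auto simp: mm_def fun_eq_iff)
  ultimately show ?thesis by simp
qed

lemma sol_bound: assumes "b \<ge> 0" shows "cmod (sol b t x) \<le> sqrt (2*b) * sech ((b/2)*x)"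
proof -
  have "cmod (sol b t x) = sqrt (2*b) * sqrt (sech (b*x))" using assms by (simp add: cmod_sol uu_def)
  also have "\<dots> \<le> sqrt (2*b) * sech ((b*x)/2)" by (rule mult_left_mono[OF sqrt_sech_le]) (simp add: assms)
  also have "(b*x)/2 = (b/2)*x" by simp
  finally show ?thesis .
qed

lemma sol_schwartz: assumes b: "b > 0" shows "schwartz (sol b t)"
proof -
  have "schwartz (\<lambda>x. 1 * sol b t x)"
    by (rule schwartz_tower[OF sol_dx mm_PC PC.PC_const sol_bound]) (use b in \<open>auto simp: less_imp_le\<close>)
  then show ?thesis by simp
qed

lemma cont_sech: "continuous_on S (\<lambda>x. sech (f x))" if "continuous_on S f"
  unfolding sech_def using that by (auto intro!: continuous_intros simp: less_imp_neq[OF cosh_real_pos, symmetric])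

lemma sol_cont: "continuous_on UNIV (\<lambda>p. sol b (fst p) (snd p))"
  unfolding sol_def uu_def th_def
  by (intro continuous_intros cont_sech)

lemma mm_cont: "continuous_on UNIV (\<lambda>p. mm b (snd p))"
  unfolding mm_def tanh_def
  by (intro continuous_intros cont_sech) (auto simp: less_imp_neq[OF cosh_real_pos, symmetric])

lemma mm'_cont: "continuous_on UNIV (\<lambda>p. mm' b (snd p))"
  unfolding mm'_def tanh_def
  by (intro continuous_intros cont_sech) (auto simp: less_imp_neq[OF cosh_real_pos, symmetric])

lemma sol_dnls: assumes b: "b > 0" shows "dnls_schwartz_solution (sol b)"
  unfolding dnls_schwartz_solution_def
proof (intro conjI allI exI)
  show "schwartz (sol b t)" for t using sol_schwartz[OF b] .
  show "((\<lambda>s. sol b s x) has_vector_derivative \<i> * complex_of_real (b^2/4) * sol b t x) (at t)" for t x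
    by (rule sol_dt)
  show "((\<lambda>y. sol b t y) has_vector_derivative mm b x * sol b t x) (at x)" for t x
    by (rule sol_dx)
  show "((\<lambda>y. mm b y * sol b t y) has_vector_derivative (mm' b x + mm b x ^ 2) * sol b t x) (at x)" for t x
    by (rule sol_dxx)
  show "continuous_on UNIV (\<lambda>p. sol b (fst p) (snd p))" by (rule sol_cont)
  show "continuous_on UNIV (\<lambda>p. \<i> * complex_of_real (b^2/4) * sol b (fst p) (snd p))"
    by (intro continuous_intros sol_cont)
  show "continuous_on UNIV (\<lambda>p. mm b (snd p) * sol b (fst p) (snd p))"
    by (intro continuous_intros sol_cont mm_cont)
  show "continuous_on UNIV (\<lambda>p. (mm' b (snd p) + mm b (snd p) ^ 2) * sol b (fst p) (snd p))"
    by (intro continuous_intros sol_cont mm_cont mm'_cont)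
  show "\<i> * (\<i> * complex_of_real (b^2/4) * sol b t x) + (mm' b x + mm b x ^ 2) * sol b t x +
        \<i> * vector_derivative (\<lambda>y. complex_of_real ((cmod (sol b t y))\<^sup>2) * sol b t y) (at x) = 0" for t x
  proof -
    have vd: "vector_derivative (\<lambda>y. complex_of_real ((cmod (sol b t y))\<^sup>2) * sol b t y) (at x) =
      (complex_of_real (2*b*(- b * tanh (b*x) * sech (b*x))) + complex_of_real (2*b * sech (b*x)) * mm b x) * sol b t x"
      using nonlin_deriv[of b t x] b by (intro vector_derivative_at) auto
    have "\<i> * (\<i> * complex_of_real (b^2/4) * sol b t x) + (mm' b x + mm b x ^ 2) * sol b t x +
        \<i> * ((complex_of_real (2*b*(- b * tanh (b*x) * sech (b*x))) + complex_of_real (2*b * sech (b*x)) * mm b x) * sol b t x)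
      = (\<i> * (\<i> * complex_of_real (b^2/4)) + (mm' b x + mm b x ^ 2)
   + \<i> * (complex_of_real (2*b*(- b * tanh (b*x) * sech (b*x))) + complex_of_real (2*b * sech (b*x)) * mm b x)) * sol b t x"
      by (simp add: algebra_simps)
    also have "\<dots> = 0" unfolding pde_identity by simp
    finally show ?thesis unfolding vd .
  qed
qed

lemma DERIV_arctan_exp: "((\<lambda>x. 2/b * arctan (exp (b*x))) has_real_derivative sech (b*x)) (at x)" if "b > 0"
proof -
  have "((\<lambda>x. (-2/(3*b)) * th b x) has_real_derivative (-2/(3*b)) * (-(3*b/2) * sech (b*x))) (at x)"
    by (intro DERIV_cmult DERIV_th)
  moreover have "(\<lambda>x. (-2/(3*b)) * th b x) = (\<lambda>x. 2/b * arctan (exp (b*x)))"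
    using that by (auto simp: th_def fun_eq_iff)
  moreover have "(-2/(3*b)) * (-(3*b/2) * sech (b*x)) = sech (b*x)" using that by simp
  ultimately show ?thesis by simp
qed

lemma LBINT_UNIV: "(LBINT x=-\<infinity>..\<infinity>. f x) = (LINT x|lborel. f x)"
  by (simp add: interval_lebesgue_integral_def einterval_eq_UNIV set_lebesgue_integral_def)

lemma sech_integral:
  assumes b: "b > 0"
  shows "integrable lborel (\<lambda>x. sech (b*x))" "(LINT x|lborel. sech (b*x)) = pi / b"
proof -
  have lim0: "((\<lambda>x. 2/b * arctan (exp (b*x))) \<longlongrightarrow> 2/b * 0) at_bot"
  proof -
    have "((\<lambda>x. exp (b*x)) \<longlongrightarrow> 0) at_bot"
      using b by (auto intro!: filterlim_compose[OF exp_at_bot] filterlim_tendsto_pos_mult_at_bot filterlim_ident)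
    then have "((\<lambda>x. arctan (exp (b*x))) \<longlongrightarrow> arctan 0) at_bot" by (intro tendsto_intros)
    then show ?thesis by (intro tendsto_intros) simp
  qed
  have lim1: "((\<lambda>x. 2/b * arctan (exp (b*x))) \<longlongrightarrow> 2/b * (pi/2)) at_top"
  proof -
    have "filterlim (\<lambda>x. exp (b*x)) at_top at_top"
      using b by (auto intro!: filterlim_compose[OF exp_at_top] filterlim_tendsto_pos_mult_at_top filterlim_ident)
    then have "((\<lambda>x. arctan (exp (b*x))) \<longlongrightarrow> pi/2) at_top" by (rule filterlim_compose[OF tendsto_arctan_at_top])
    then show ?thesis by (intro tendsto_intros)
  qed
  have ic: "isCont (\<lambda>x. sech (b*x)) x" for x
    using continuous_on_interior[OF cont_sech[of UNIV "\<lambda>x. b*x"]] by (auto intro: continuous_intros)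
  note F = interval_integral_FTC_nonneg[of "-\<infinity>" "\<infinity>" "\<lambda>x. 2/b * arctan (exp (b*x))" "\<lambda>x. sech (b*x)" 0 "pi/b"]
  have hyps: "\<And>x. DERIV (\<lambda>x. 2/b * arctan (exp (b*x))) x :> sech (b*x)"
     "\<And>x. isCont (\<lambda>x. sech (b*x)) x"
     "AE x in lborel. 0 \<le> sech (b*x)"
     "(((\<lambda>x. 2/b * arctan (exp (b*x))) \<circ> real_of_ereal) \<longlongrightarrow> 0) (at_right (-\<infinity>))"
     "(((\<lambda>x. 2/b * arctan (exp (b*x))) \<circ> real_of_ereal) \<longlongrightarrow> pi/b) (at_left \<infinity>)"
    using DERIV_arctan_exp[OF b] lim0 lim1
    by (auto simp: ereal_tendsto_simps sech_pos less_imp_le ic)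
  have "set_integrable lborel (einterval (-\<infinity>) \<infinity>) (\<lambda>x. sech (b*x))"
       "(LBINT x=-\<infinity>..\<infinity>. sech (b*x)) = pi/b - 0"
    using F hyps by auto
  then show "integrable lborel (\<lambda>x. sech (b*x))" "(LINT x|lborel. sech (b*x)) = pi / b"
    by (simp_all add: LBINT_UNIV einterval_eq_UNIV set_integrable_def)
qed

lemma sol_mass: assumes b: "b > 0" shows "(LINT x|lborel. (cmod (sol b t x))\<^sup>2) = 2 * pi"
proof -
  have "(LINT x|lborel. (cmod (sol b t x))\<^sup>2) = (LINT x|lborel. 2*b * sech (b*x))"
    using b by (simp add: cmod_sol_sq)
  also have "\<dots> = 2*b * (pi/b)" using sech_integral[OF b] by simp
  finally show ?thesis using b by simp
qed

lemma cis_neg_deriv: "((\<lambda>x. cis (-(x*\<xi>))) has_vector_derivative (- \<i> * complex_of_real \<xi> * cis (-(x*\<xi>)))) (at x)"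
proof -
  have "((\<lambda>x. exp (\<i> * complex_of_real (-(x*\<xi>)))) has_vector_derivative (\<i> * complex_of_real (-\<xi>) * exp (\<i> * complex_of_real (-(x*\<xi>))))) (at x)"
    by (rule expi_deriv) (auto intro!: derivative_eq_intros)
  then show ?thesis by (simp add: cis_conv_exp)
qed

lemma cont_meas: "continuous_on UNIV f \<Longrightarrow> f \<in> borel_measurable lborel"
  by (simp add: borel_measurable_continuous_onI)

lemma cont_cis: "continuous_on UNIV (\<lambda>x. cis (-(x*\<xi>)))"
  unfolding cis_conv_exp by (intro continuous_intros)

lemma int_cis:
  assumes "integrable lborel \<phi>" "continuous_on UNIV \<phi>"
  shows "integrable lborel (\<lambda>x. cis (-(x*\<xi>)) * \<phi> x)"
proof (rule Bochner_Integration.integrable_bound[OF assms(1)])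
  show "(\<lambda>x. cis (-(x*\<xi>)) * \<phi> x) \<in> borel_measurable lborel"
    by (intro cont_meas continuous_intros cont_cis assms(2))
qed (simp add: norm_mult)

lemma fourier_bound:
  assumes "integrable lborel \<phi>" "continuous_on UNIV \<phi>"
  shows "cmod (fourier \<phi> \<xi>) \<le> (1 / sqrt (2*pi)) * (LINT x|lborel. cmod (\<phi> x))"
proof -
  have "cmod (LINT x|lborel. cis (-(x*\<xi>)) * \<phi> x) \<le> (LINT x|lborel. cmod (cis (-(x*\<xi>)) * \<phi> x))"
    by (rule Bochner_Integration.integral_norm_bound)
  also have "\<dots> = (LINT x|lborel. cmod (\<phi> x))" by (simp add: norm_mult)
  finally have "cmod (LINT x|lborel. cis (-(x*\<xi>)) * \<phi> x) / sqrt (2*pi) \<le> (LINT x|lborel. cmod (\<phi> x)) / sqrt (2*pi)"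
    by (simp add: divide_right_mono)
  then show ?thesis unfolding fourier_def by (simp add: norm_mult norm_divide)
qed

definition nice :: "(real \<Rightarrow> complex) \<Rightarrow> (real \<Rightarrow> complex) \<Rightarrow> bool" where
  "nice \<phi> \<phi>' \<longleftrightarrow> (\<forall>x. (\<phi> has_vector_derivative \<phi>' x) (at x)) \<and> continuous_on UNIV \<phi> \<and> continuous_on UNIV \<phi>'
     \<and> integrable lborel \<phi> \<and> integrable lborel \<phi>' \<and> (\<phi> \<longlongrightarrow> 0) at_top \<and> (\<phi> \<longlongrightarrow> 0) at_bot"

lemma fourier_deriv:
  assumes n: "nice \<phi> \<phi>'"
  shows "fourier \<phi>' \<xi> = \<i> * complex_of_real \<xi> * fourier \<phi> \<xi>"
proof -
  from n have d: "\<And>x. (\<phi> has_vector_derivative \<phi>' x) (at x)" and c: "continuous_on UNIV \<phi>" "continuous_on UNIV \<phi>'"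
    and i: "integrable lborel \<phi>" "integrable lborel \<phi>'" and l: "(\<phi> \<longlongrightarrow> 0) at_top" "(\<phi> \<longlongrightarrow> 0) at_bot"
    unfolding nice_def by auto
  define G where "G x = cis (-(x*\<xi>)) * \<phi> x" for x
  define G' where "G' x = cis (-(x*\<xi>)) * \<phi>' x + (- \<i> * complex_of_real \<xi>) * (cis (-(x*\<xi>)) * \<phi> x)" for x
  have dG: "(G has_vector_derivative G' x) (at x)" for x
    unfolding G_def[abs_def] G'_def
    by (rule has_vector_derivative_eq_rhs[OF has_vector_derivative_mult[OF cis_neg_deriv d]]) (simp add: algebra_simps)
  have cG': "continuous_on UNIV G'" unfolding G'_def[abs_def] by (intro continuous_intros cont_cis c)
  have i1: "integrable lborel (\<lambda>x. cis (-(x*\<xi>)) * \<phi>' x)" by (rule int_cis[OF i(2) c(2)])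
  have i2: "integrable lborel (\<lambda>x. cis (-(x*\<xi>)) * \<phi> x)" by (rule int_cis[OF i(1) c(1)])
  have iG': "integrable lborel G'"
    unfolding G'_def by (rule Bochner_Integration.integrable_add[OF i1 integrable_mult_right[OF i2]])
  have nG: "norm (G x) = norm (\<phi> x)" for x by (simp add: G_def norm_mult)
  have "((\<lambda>x. norm (G x)) \<longlongrightarrow> 0) at_top" using tendsto_norm_zero[OF l(1)] unfolding nG .
  then have lG1: "(G \<longlongrightarrow> 0) at_top" by (rule tendsto_norm_zero_cancel)
  have "((\<lambda>x. norm (G x)) \<longlongrightarrow> 0) at_bot" using tendsto_norm_zero[OF l(2)] unfolding nG .
  then have lG2: "(G \<longlongrightarrow> 0) at_bot" by (rule tendsto_norm_zero_cancel)
  have icG': "isCont G' x" for x using cG' by (simp add: continuous_on_eq_continuous_at)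
  have siG': "set_integrable lborel (einterval (-\<infinity>) \<infinity>) G'"
    unfolding set_integrable_def einterval_eq_UNIV using iG' by simp
  have lim1: "((G \<circ> real_of_ereal) \<longlongrightarrow> 0) (at_right (-\<infinity>))" using lG2 by (simp add: ereal_tendsto_simps)
  have lim2: "((G \<circ> real_of_ereal) \<longlongrightarrow> 0) (at_left \<infinity>)" using lG1 by (simp add: ereal_tendsto_simps)
  have "(LBINT x=-\<infinity>..\<infinity>. G' x) = 0 - 0"
    by (rule interval_integral_FTC_integrable[of "-\<infinity>" "\<infinity>" G G', OF _ dG icG' siG' lim1 lim2]) simp
  then have "(LINT x|lborel. G' x) = 0" by (simp add: LBINT_UNIV)
  then have "(LINT x|lborel. cis (-(x*\<xi>)) * \<phi>' x) + (- \<i> * complex_of_real \<xi>) * (LINT x|lborel. cis (-(x*\<xi>)) * \<phi> x) = 0"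
    unfolding G'_def using i1 i2 by simp
  then have "(LINT x|lborel. cis (-(x*\<xi>)) * \<phi>' x) = \<i> * complex_of_real \<xi> * (LINT x|lborel. cis (-(x*\<xi>)) * \<phi> x)"
    by (simp add: algebra_simps)
  then show ?thesis unfolding fourier_def by (simp add: algebra_simps)
qed


lemma pair_meas:
  assumes "continuous_on UNIV (\<lambda>p::real\<times>real. h p)"
  shows "h \<in> borel_measurable (lborel \<Otimes>\<^sub>M lborel)"
  unfolding lborel_prod measurable_lborel2 by (rule borel_measurable_continuous_onI[OF assms])

lemma fourier_meas:
  assumes c: "continuous_on UNIV \<phi>"
  shows "fourier \<phi> \<in> borel_measurable lborel"
proof -
  have "(\<lambda>(\<xi>, x). cis (-(x*\<xi>)) * \<phi> x) \<in> borel_measurable (lborel \<Otimes>\<^sub>M lborel)"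
  proof -
    have "continuous_on UNIV (\<lambda>p::real\<times>real. cis (-(snd p * fst p)) * \<phi> (snd p))"
      unfolding cis_conv_exp by (intro continuous_intros continuous_on_compose2[OF c]) auto
    then show ?thesis using pair_meas by (simp add: case_prod_beta')
  qed
  then have "(\<lambda>\<xi>. LINT x|lborel. cis (-(x*\<xi>)) * \<phi> x) \<in> borel_measurable lborel"
    by (rule lborel.borel_measurable_lebesgue_integral)
  then show ?thesis unfolding fourier_def[abs_def] by simp
qed

lemma fourier_decay:
  assumes n1: "nice f f1" and n2: "nice f1 f2"
  shows "\<xi>^2 * cmod (fourier f \<xi>) \<le> (1 / sqrt (2*pi)) * (LINT x|lborel. cmod (f2 x))"
proof -
  have "fourier f2 \<xi> = \<i> * complex_of_real \<xi> * (\<i> * complex_of_real \<xi> * fourier f \<xi>)"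
    using fourier_deriv[OF n2] fourier_deriv[OF n1] by simp
  then have "cmod (fourier f2 \<xi>) = \<xi>^2 * cmod (fourier f \<xi>)"
    by (simp add: norm_mult power2_eq_square)
  moreover have "cmod (fourier f2 \<xi>) \<le> (1 / sqrt (2*pi)) * (LINT x|lborel. cmod (f2 x))"
    using n2 unfolding nice_def by (intro fourier_bound) auto
  ultimately show ?thesis by simp
qed

lemma weight_bound:
  fixes \<xi> a C0 C2 :: real
  assumes a0: "0 \<le> a" and aC0: "a \<le> C0" and aC2: "\<xi>^2 * a \<le> C2"
  shows "sqrt (4 + \<xi>^2) * a^2 \<le> 6 * (C0^2 + C2^2) * inverse (1 + \<xi>^2)"
proof -
  have w: "sqrt (4 + \<xi>^2) \<le> 2 + \<bar>\<xi>\<bar>"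
    by (rule real_le_lsqrt) (auto simp: power2_eq_square algebra_simps)
  have p: "1 + \<xi>^2 > 0" by (simp add: add_pos_nonneg)
  have "(1 + \<xi>^2) * (sqrt (4 + \<xi>^2) * a^2) \<le> 6 * (C0^2 + C2^2)"
  proof (cases "\<bar>\<xi>\<bar> \<le> 1")
    case True
    have x2: "\<xi>^2 \<le> 1" using True by (simp add: abs_le_square_iff[of \<xi> 1, simplified])
    have "(1 + \<xi>^2) * (sqrt (4 + \<xi>^2) * a^2) \<le> 2 * (3 * C0^2)"
      using x2 w True a0 aC0 by (intro mult_mono power_mono) auto
    then show ?thesis by (smt (verit) zero_le_power2)
  next
    case False
    have "1 < \<bar>\<xi>\<bar>" using False by simp
    then have "1 < \<bar>\<xi>\<bar>^2" using one_less_power[of "\<bar>\<xi>\<bar>" 2] by linarith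
    then have x2: "1 \<le> \<xi>^2" by (simp only: power2_abs)
    have w3: "sqrt (4 + \<xi>^2) \<le> 3 * \<xi>^2"
    proof -
      have "\<bar>\<xi>\<bar> * 1 \<le> \<bar>\<xi>\<bar> * \<bar>\<xi>\<bar>" using False by (intro mult_left_mono) auto
      then have "\<bar>\<xi>\<bar> \<le> \<xi>^2" by (simp add: power2_eq_square abs_mult_self)
      then show ?thesis using w x2 by linarith
    qed
    have "(1 + \<xi>^2) * (sqrt (4 + \<xi>^2) * a^2) \<le> (2 * \<xi>^2) * ((3 * \<xi>^2) * a^2)"
      using x2 w3 by (intro mult_mono) auto
    also have "\<dots> = 6 * (\<xi>^2 * a)^2" by (simp add: power2_eq_square)
    also have "\<dots> \<le> 6 * C2^2"
      using aC2 a0 by (intro mult_left_mono power_mono) auto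
    finally show ?thesis by (smt (verit) zero_le_power2)
  qed
  then show ?thesis using p by (simp add: field_simps)
qed

lemma H_integrable:
  assumes n1: "nice f f1" and n2: "nice f1 f2"
  shows "integrable lborel (\<lambda>\<xi>. sqrt (4 + \<xi>^2) * (cmod (fourier f \<xi>))^2)"
proof -
  define C0 where "C0 = (1 / sqrt (2*pi)) * (LINT x|lborel. cmod (f x))"
  define C2 where "C2 = (1 / sqrt (2*pi)) * (LINT x|lborel. cmod (f2 x))"
  have cf: "continuous_on UNIV f" "integrable lborel f" using n1 unfolding nice_def by auto
  have i1: "integrable lborel (\<lambda>x::real. inverse (1 + x^2))"
    using integrable_inverse_1_plus_square by (simp add: set_integrable_def einterval_eq_UNIV)
  show ?thesis
  proof (rule Bochner_Integration.integrable_bound[OF integrable_mult_right[OF i1, of "6 * (C0^2 + C2^2)"]])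
    show "(\<lambda>\<xi>. sqrt (4 + \<xi>^2) * (cmod (fourier f \<xi>))^2) \<in> borel_measurable lborel"
      using fourier_meas[OF cf(1)] by measurable
    show "AE \<xi> in lborel. norm (sqrt (4 + \<xi>^2) * (cmod (fourier f \<xi>))^2) \<le> norm (6 * (C0^2 + C2^2) * inverse (1 + \<xi>^2))"
    proof (rule AE_I2)
      fix \<xi> :: real
      have "sqrt (4 + \<xi>^2) * (cmod (fourier f \<xi>))^2 \<le> 6 * (C0^2 + C2^2) * inverse (1 + \<xi>^2)"
        using fourier_bound[OF cf(2) cf(1)] fourier_decay[OF n1 n2]
        by (intro weight_bound) (auto simp: C0_def C2_def)
      moreover have "0 \<le> sqrt (4 + \<xi>^2) * (cmod (fourier f \<xi>))^2" by simp
      ultimately show "norm (sqrt (4 + \<xi>^2) * (cmod (fourier f \<xi>))^2) \<le> norm (6 * (C0^2 + C2^2) * inverse (1 + \<xi>^2))"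
        by simp
    qed
  qed
qed


lemma gauss_as_normal:
  assumes s: "s > 0"
  shows "exp (- (x^2) / (2 * s^2)) = sqrt (2*pi) * s * normal_density 0 s x"
proof -
  have "sqrt (2*pi* s^2) = sqrt (2*pi) * s" using s by (simp add: real_sqrt_mult)
  then show ?thesis using s by (simp add: normal_density_def)
qed

lemma gauss_integrable:
  assumes s: "s > 0"
  shows "integrable lborel (\<lambda>x. exp (- (x^2) / (2 * s^2)))"
    "(LINT x|lborel. exp (- (x^2) / (2 * s^2))) = sqrt (2*pi) * s"
proof -
  show "integrable lborel (\<lambda>x. exp (- (x^2) / (2 * s^2)))"
    unfolding gauss_as_normal[OF s] by (rule integrable_mult_right) (use s in simp)
  show "(LINT x|lborel. exp (- (x^2) / (2 * s^2))) = sqrt (2*pi) * s"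
    unfolding gauss_as_normal[OF s] by (simp only: integral_mult_right_zero integral_normal_density mult_1_right) (use s in simp)
qed

lemma char_std_normal_lborel:
  "(LINT u|lborel. std_normal_density u *\<^sub>R iexp (t*u)) = complex_of_real (exp (- (t^2) / 2))"
proof -
  have "char std_normal_distribution t = complex_of_real (exp (- (t^2) / 2))"
    by (simp add: char_std_normal_distribution)
  moreover have "char std_normal_distribution t = (LINT u|lborel. std_normal_density u *\<^sub>R iexp (t*u))"
    unfolding char_def by (rule integral_density) (auto simp: normal_density_nonneg)
  ultimately show ?thesis by simp
qed

lemma gauss_ft:
  assumes \<sigma>: "\<sigma> > 0"
  shows "(LINT \<xi>|lborel. cis (-(x*\<xi>)) * complex_of_real (exp (- (\<sigma>^2 * \<xi>^2) / 2)))
         = complex_of_real (sqrt (2*pi) / \<sigma> * exp (- (x^2) / (2 * \<sigma>^2)))"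
proof -
  have "(LINT \<xi>|lborel. cis (-(x*\<xi>)) * complex_of_real (exp (- (\<sigma>^2 * \<xi>^2) / 2)))
       = \<bar>1/\<sigma>\<bar> *\<^sub>R (LINT u|lborel. cis (-(x*(0 + 1/\<sigma> * u))) * complex_of_real (exp (- (\<sigma>^2 * (0 + 1/\<sigma> * u)^2) / 2)))"
    using \<sigma> by (intro lborel_integral_real_affine) simp
  also have "(\<lambda>u. cis (-(x*(0 + 1/\<sigma> * u))) * complex_of_real (exp (- (\<sigma>^2 * (0 + 1/\<sigma> * u)^2) / 2)))
     = (\<lambda>u. sqrt (2*pi) *\<^sub>R (std_normal_density u *\<^sub>R iexp ((-x/\<sigma>)*u)))"
    using \<sigma> by (auto simp: fun_eq_iff cis_conv_exp std_normal_density_def power_divide scaleR_conv_of_real field_simps)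
  also have "(LINT u|lborel. sqrt (2*pi) *\<^sub>R (std_normal_density u *\<^sub>R iexp ((-x/\<sigma>)*u)))
      = sqrt (2*pi) *\<^sub>R complex_of_real (exp (- ((-x/\<sigma>)^2) / 2))"
    by (simp only: integral_scaleR_right char_std_normal_lborel)
  finally show ?thesis using \<sigma> by (simp add: scaleR_conv_of_real power_divide field_simps)
qed

lemma fubini_gauss:
  assumes \<sigma>: "\<sigma> > 0" and fi: "integrable lborel f" and fc: "continuous_on UNIV f"
  shows "(LINT \<xi>|lborel. fourier f \<xi> * complex_of_real (exp (- (\<sigma>^2 * \<xi>^2) / 2)))
       = (LINT x|lborel. f x * complex_of_real (1/\<sigma> * exp (- (x^2) / (2 * \<sigma>^2))))"
proof -
  define g where "g \<xi> = exp (- (\<sigma>^2 * \<xi>^2) / 2)" for \<xi>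
  define K where "K \<xi> x = cis (-(x*\<xi>)) * f x * complex_of_real (g \<xi>)" for \<xi> x
  have g_alt: "g \<xi> = exp (- (\<xi>^2) / (2 * (1/\<sigma>)^2))" for \<xi>
    unfolding g_def using \<sigma> by (simp add: power_divide field_simps)
  have gi: "integrable lborel g"
    unfolding g_alt using gauss_integrable(1)[of "1/\<sigma>"] \<sigma> by simp
  have gc: "continuous_on UNIV g" unfolding g_def by (intro continuous_intros) auto
  have meas: "(\<lambda>(\<xi>, x). K \<xi> x) \<in> borel_measurable (lborel \<Otimes>\<^sub>M lborel)"
  proof -
    have "continuous_on UNIV (\<lambda>p::real\<times>real. cis (-(snd p * fst p)) * f (snd p) * complex_of_real (g (fst p)))"
      unfolding cis_conv_exp
      by (intro continuous_intros continuous_on_compose2[OF fc] continuous_on_compose2[OF gc]) auto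
    then show ?thesis using pair_meas unfolding K_def by (simp add: case_prod_beta')
  qed
  have nK: "(LINT x|lborel. norm (K \<xi> x)) = g \<xi> * (LINT x|lborel. cmod (f x))" for \<xi>
  proof -
    have "(LINT x|lborel. norm (K \<xi> x)) = (LINT x|lborel. g \<xi> * cmod (f x))"
      unfolding K_def g_def by (simp add: norm_mult)
    then show ?thesis by simp
  qed
  have INT: "integrable (lborel \<Otimes>\<^sub>M lborel) (\<lambda>(\<xi>, x). K \<xi> x)"
  proof (rule lborel_pair.Fubini_integrable)
    show "(\<lambda>(\<xi>, x). K \<xi> x) \<in> borel_measurable (lborel \<Otimes>\<^sub>M lborel)" by (rule meas)
    show "integrable lborel (\<lambda>\<xi>. LINT x|lborel. norm (case (\<xi>, x) of (\<xi>, x) \<Rightarrow> K \<xi> x))"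
      unfolding nK case_prod_conv by (rule integrable_mult_left[OF gi])
    show "AE \<xi> in lborel. integrable lborel (\<lambda>x. case (\<xi>, x) of (\<xi>, x) \<Rightarrow> K \<xi> x)"
      unfolding K_def case_prod_conv by (intro AE_I2 integrable_mult_left int_cis fi fc)
  qed
  have FI: "(LINT x|lborel. LINT \<xi>|lborel. K \<xi> x) = (LINT \<xi>|lborel. LINT x|lborel. K \<xi> x)"
    using lborel_pair.Fubini_integral[OF INT] .
  have L: "(LINT \<xi>|lborel. LINT x|lborel. K \<xi> x) = complex_of_real (sqrt (2*pi)) * (LINT \<xi>|lborel. fourier f \<xi> * complex_of_real (g \<xi>))"
  proof -
    have "(LINT x|lborel. K \<xi> x) = complex_of_real (sqrt (2*pi)) * (fourier f \<xi> * complex_of_real (g \<xi>))" for \<xi>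
    proof -
      have "(LINT x|lborel. K \<xi> x) = (LINT x|lborel. cis (-(x*\<xi>)) * f x) * complex_of_real (g \<xi>)"
        unfolding K_def by (rule integral_mult_left_zero)
      also have "(LINT x|lborel. cis (-(x*\<xi>)) * f x) = complex_of_real (sqrt (2*pi)) * fourier f \<xi>"
        unfolding fourier_def by simp
      finally show ?thesis by (simp add: mult_ac)
    qed
    then show ?thesis by simp
  qed
  have R: "(LINT x|lborel. LINT \<xi>|lborel. K \<xi> x) = complex_of_real (sqrt (2*pi)) * (LINT x|lborel. f x * complex_of_real (1/\<sigma> * exp (- (x^2) / (2 * \<sigma>^2))))"
  proof -
    have "(LINT \<xi>|lborel. K \<xi> x) = complex_of_real (sqrt (2*pi)) * (f x * complex_of_real (1/\<sigma> * exp (- (x^2) / (2 * \<sigma>^2))))" for x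
    proof -
      have "(LINT \<xi>|lborel. K \<xi> x) = f x * (LINT \<xi>|lborel. cis (-(x*\<xi>)) * complex_of_real (exp (- (\<sigma>^2 * \<xi>^2) / 2)))"
        unfolding K_def g_def by (subst integral_mult_right_zero[symmetric]) (simp add: mult_ac)
      also have "\<dots> = f x * complex_of_real (sqrt (2*pi) / \<sigma> * exp (- (x^2) / (2 * \<sigma>^2)))"
        by (simp only: gauss_ft[OF \<sigma>])
      finally show ?thesis by (simp add: mult_ac)
    qed
    then show ?thesis by simp
  qed
  have c0: "complex_of_real (sqrt (2*pi)) \<noteq> 0" by simp
  have eq: "complex_of_real (sqrt (2*pi)) * (LINT x|lborel. f x * complex_of_real (1/\<sigma> * exp (- (x^2) / (2 * \<sigma>^2))))
     = complex_of_real (sqrt (2*pi)) * (LINT \<xi>|lborel. fourier f \<xi> * complex_of_real (g \<xi>))"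
    using FI by (simp only: L R)
  have "(LINT \<xi>|lborel. fourier f \<xi> * complex_of_real (g \<xi>)) = (LINT x|lborel. f x * complex_of_real (1/\<sigma> * exp (- (x^2) / (2 * \<sigma>^2))))"
    using mult_left_cancel[OF c0, THEN iffD1, OF eq] by (rule sym)
  then show ?thesis unfolding g_def .
qed

lemma mvt_bound:
  assumes d: "\<And>x. (f has_vector_derivative f1 x) (at x)" and L: "\<And>x. cmod (f1 x) \<le> L"
  shows "cmod (f x - f y) \<le> L * \<bar>x - y\<bar>"
proof -
  have "norm (f x - f y) \<le> L * norm (x - y)"
  proof (rule differentiable_bound[of UNIV f "\<lambda>x h. h *\<^sub>R f1 x"])
    show "convex (UNIV::real set)" by simp
    show "(f has_derivative (\<lambda>h. h *\<^sub>R f1 x)) (at x within UNIV)" for x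
      using d[of x] by (simp add: has_vector_derivative_def)
    show "onorm (\<lambda>h. h *\<^sub>R f1 x) \<le> L" for x
    proof (rule onorm_le)
      fix h :: real
      show "norm (h *\<^sub>R f1 x) \<le> L * norm h"
        using mult_left_mono[OF L[of x] abs_ge_zero[of h]] by (simp add: mult.commute)
    qed
  qed auto
  then show ?thesis by simp
qed

lemma cont_normal: "\<sigma> > 0 \<Longrightarrow> continuous_on UNIV (normal_density 0 \<sigma>)"
  unfolding normal_density_def[abs_def] by (intro continuous_intros) auto

lemma gauss_avg:
  assumes \<sigma>: "\<sigma> > 0" and d: "\<And>x. (f has_vector_derivative f1 x) (at x)" and L: "\<And>x. cmod (f1 x) \<le> L"
    and fc: "continuous_on UNIV f"
  shows "integrable lborel (\<lambda>x. f x * complex_of_real (normal_density 0 \<sigma> x))"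
    "cmod (LINT x|lborel. f x * complex_of_real (normal_density 0 \<sigma> x)) \<ge> cmod (f 0) - L * \<sigma>"
proof -
  let ?N = "normal_density 0 \<sigma>"
  have L0: "L \<ge> 0" using L[of 0] norm_ge_zero[of "f1 0"] by linarith
  have Ni: "integrable lborel ?N" and N1: "(LINT x|lborel. ?N x) = 1" using \<sigma> by auto
  have Nm: "integrable lborel (\<lambda>x. ?N x * \<bar>x - 0\<bar>^1)"
    using integrable_normal_moment_abs[OF \<sigma>, of 0 1] .
  have Nmi: "(LINT x|lborel. ?N x * \<bar>x - 0\<bar>^(2*0+1)) = 2 ^ 0 * \<sigma> ^ (2 * 0 + 1) * fact 0 * sqrt (2 / pi)"
    using integral_normal_moment_abs_odd[OF \<sigma>, of 0 0] .
  have Nmi': "(LINT x|lborel. L * (?N x * \<bar>x\<bar>)) = L * (\<sigma> * sqrt (2 / pi))"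
    using Nmi by simp
  have gmeas: "(\<lambda>x. (f x - f 0) * complex_of_real (?N x)) \<in> borel_measurable lborel"
    by (intro cont_meas continuous_intros fc continuous_on_compose2[OF cont_normal[OF \<sigma>]]) auto
  have gb: "norm ((f x - f 0) * complex_of_real (?N x)) \<le> L * (?N x * \<bar>x\<bar>)" for x
  proof -
    have "norm ((f x - f 0) * complex_of_real (?N x)) = cmod (f x - f 0) * ?N x"
      by (simp add: norm_mult)
    also have "\<dots> \<le> (L * \<bar>x - 0\<bar>) * ?N x"
      by (intro mult_right_mono mvt_bound[OF d L]) simp
    finally show ?thesis by (simp add: mult_ac)
  qed
  have gi: "integrable lborel (\<lambda>x. (f x - f 0) * complex_of_real (?N x))"
    by (rule Bochner_Integration.integrable_bound[OF integrable_mult_right[OF Nm, of L] gmeas])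
       (rule AE_I2, use gb L0 in \<open>auto simp: abs_mult normal_density_nonneg\<close>)
  have ci: "integrable lborel (\<lambda>x. f 0 * complex_of_real (?N x))"
    using Ni by (intro integrable_mult_right integrable_of_real)
  have eqf: "(\<lambda>x. f x * complex_of_real (?N x)) = (\<lambda>x. (f x - f 0) * complex_of_real (?N x) + f 0 * complex_of_real (?N x))"
    by (auto simp: algebra_simps)
  show fi: "integrable lborel (\<lambda>x. f x * complex_of_real (?N x))"
    unfolding eqf by (rule Bochner_Integration.integrable_add[OF gi ci])
  have "(LINT x|lborel. f x * complex_of_real (?N x)) = (LINT x|lborel. (f x - f 0) * complex_of_real (?N x)) + (LINT x|lborel. f 0 * complex_of_real (?N x))"
    unfolding eqf by (rule Bochner_Integration.integral_add[OF gi ci])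
  also have "(LINT x|lborel. f 0 * complex_of_real (?N x)) = f 0"
    using N1 by simp
  finally have eq: "(LINT x|lborel. f x * complex_of_real (?N x)) = (LINT x|lborel. (f x - f 0) * complex_of_real (?N x)) + f 0" .
  have "cmod (LINT x|lborel. (f x - f 0) * complex_of_real (?N x)) \<le> (LINT x|lborel. L * (?N x * \<bar>x\<bar>))"
  proof -
    have NmL: "integrable lborel (\<lambda>x. L * (?N x * \<bar>x\<bar>))" using integrable_mult_right[OF Nm, of L] by simp
    show ?thesis by (rule Bochner_Integration.integral_norm_bound_integral[OF gi NmL gb])
  qed
  also have "\<dots> \<le> L * \<sigma>"
  proof -
    have "sqrt (2/pi) \<le> 1" using pi_gt3 by simp
    then have "\<sigma> * sqrt (2/pi) \<le> \<sigma> * 1" using \<sigma> by (intro mult_left_mono) auto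
    then have "L * (\<sigma> * sqrt (2/pi)) \<le> L * (\<sigma> * 1)" by (rule mult_left_mono[OF _ L0])
    then show ?thesis unfolding Nmi' by simp
  qed
  finally have e: "cmod (LINT x|lborel. (f x - f 0) * complex_of_real (?N x)) \<le> L * \<sigma>" .
  have "cmod (f 0) \<le> cmod (LINT x|lborel. f x * complex_of_real (?N x)) + cmod (LINT x|lborel. (f x - f 0) * complex_of_real (?N x))"
  proof -
    have "f 0 = (LINT x|lborel. f x * complex_of_real (?N x)) - (LINT x|lborel. (f x - f 0) * complex_of_real (?N x))"
      unfolding eq by simp
    then show ?thesis using norm_triangle_ineq4 by metis
  qed
  then show "cmod (LINT x|lborel. f x * complex_of_real (?N x)) \<ge> cmod (f 0) - L * \<sigma>" using e by linarith
qed

lemma amgm: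
  fixes P G w t :: real
  assumes "P \<ge> 0" "G \<ge> 0" "w > 0" "t > 0"
  shows "P * G \<le> t/2 * (w * P^2) + 1/(2*t) * (G^2 / w)"
proof -
  have "0 \<le> (t*w*P - G)^2" by simp
  then have "2*(t*w)*(P*G) \<le> (t*w)*(t*w*P^2) + G^2" by (simp add: power2_eq_square algebra_simps)
  then have "(2*(t*w)*(P*G)) / (2*(t*w)) \<le> ((t*w)*(t*w*P^2) + G^2) / (2*(t*w))"
    using assms by (intro divide_right_mono) auto
  also have "((t*w)*(t*w*P^2) + G^2) / (2*(t*w)) = t/2 * (w * P^2) + 1/(2*t) * (G^2 / w)"
    using assms by (simp add: field_simps power2_eq_square)
  finally show ?thesis using assms by simp
qed

lemma gauss2_integrable:
  fixes \<sigma> :: real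
  assumes \<sigma>: "\<sigma> > 0"
  shows "integrable lborel (\<lambda>\<xi>. exp (- (\<sigma>^2 * \<xi>^2)))"
proof -
  have e: "- (\<sigma>^2 * \<xi>^2) = - (\<xi>^2) / (2 * (1 / (sqrt 2 * \<sigma>))^2)" for \<xi> :: real
    using \<sigma> by (simp add: power_divide power_mult_distrib field_simps)
  show ?thesis unfolding e using gauss_integrable(1)[of "1 / (sqrt 2 * \<sigma>)"] \<sigma> by simp
qed

lemma H_lower:
  assumes n1: "nice f f1" and n2: "nice f1 f2" and \<sigma>: "\<sigma> > 0"
    and L: "\<And>x. cmod (f1 x) \<le> L" and A0: "L * \<sigma> \<le> cmod (f 0)"
    and Bb: "Bb > 0" and BB: "(LINT \<xi>|lborel. exp (- (\<sigma>^2 * \<xi>^2)) / sqrt (4 + \<xi>^2)) \<le> Bb"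
  shows "2*pi*(cmod (f 0) - L*\<sigma>)^2 / Bb \<le> H_half_norm_sq f"
proof -
  have d: "\<And>x. (f has_vector_derivative f1 x) (at x)" and fc: "continuous_on UNIV f"
    and fi: "integrable lborel f" using n1 unfolding nice_def by auto
  define g where "g \<xi> = exp (- (\<sigma>^2 * \<xi>^2) / 2)" for \<xi>
  define A where "A = sqrt (2*pi) * (cmod (f 0) - L*\<sigma>)"
  have A0': "A \<ge> 0" unfolding A_def using A0 by simp
  define Hs where "Hs = H_half_norm_sq f"
  have Hs_def': "Hs = (LINT \<xi>|lborel. sqrt (4 + \<xi>^2) * (cmod (fourier f \<xi>))^2)"
    unfolding Hs_def H_half_norm_sq_def ..
  have H0: "Hs \<ge> 0" unfolding Hs_def' by (intro integral_nonneg_AE) auto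
  define I where "I = (LINT \<xi>|lborel. fourier f \<xi> * complex_of_real (g \<xi>))"
  have I_eq: "I = complex_of_real (sqrt (2*pi)) * (LINT x|lborel. f x * complex_of_real (normal_density 0 \<sigma> x))"
  proof -
    have "I = (LINT x|lborel. f x * complex_of_real (1/\<sigma> * exp (- (x^2) / (2 * \<sigma>^2))))"
      unfolding I_def g_def by (rule fubini_gauss[OF \<sigma> fi fc])
    also have "\<dots> = (LINT x|lborel. complex_of_real (sqrt (2*pi)) * (f x * complex_of_real (normal_density 0 \<sigma> x)))"
    proof -
      have pt: "1/\<sigma> * exp (- (x^2) / (2 * \<sigma>^2)) = sqrt (2*pi) * normal_density 0 \<sigma> x" for x
        using gauss_as_normal[OF \<sigma>, of x] \<sigma> by simp
      show ?thesis unfolding pt by (simp add: mult_ac)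
    qed
    also have "\<dots> = complex_of_real (sqrt (2*pi)) * (LINT x|lborel. f x * complex_of_real (normal_density 0 \<sigma> x))"
      by (rule integral_mult_right_zero)
    finally show ?thesis .
  qed
  have IA: "cmod I \<ge> A"
    unfolding I_eq A_def norm_mult using gauss_avg(2)[OF \<sigma> d L fc] by (simp add: mult_left_mono)
  show ?thesis
  proof (cases "A = 0")
    case True
    then have "cmod (f 0) - L*\<sigma> = 0" unfolding A_def by simp
    then show ?thesis using H0 unfolding Hs_def by simp
  next
    case False
    then have Ap: "A > 0" using A0' by simp
    define t where "t = Bb / A"
    have tp: "t > 0" unfolding t_def using Ap Bb by simp
    define C0 where "C0 = (1 / sqrt (2*pi)) * (LINT x|lborel. cmod (f x))"
    have FC0: "cmod (fourier f \<xi>) \<le> C0" for \<xi> unfolding C0_def by (rule fourier_bound[OF fi fc])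
    have gi: "integrable lborel g"
    proof -
      have e: "g \<xi> = exp (- (\<xi>^2) / (2 * (1/\<sigma>)^2))" for \<xi>
        unfolding g_def using \<sigma> by (simp add: power_divide field_simps)
      show ?thesis unfolding e using gauss_integrable(1)[of "1/\<sigma>"] \<sigma> by simp
    qed
    have iFg: "integrable lborel (\<lambda>\<xi>. fourier f \<xi> * complex_of_real (g \<xi>))"
    proof (rule Bochner_Integration.integrable_bound[OF integrable_mult_right[OF gi, of C0]])
      show "(\<lambda>\<xi>. fourier f \<xi> * complex_of_real (g \<xi>)) \<in> borel_measurable lborel"
        using fourier_meas[OF fc] unfolding g_def by measurable
      show "AE \<xi> in lborel. norm (fourier f \<xi> * complex_of_real (g \<xi>)) \<le> norm (C0 * g \<xi>)"
      proof (rule AE_I2)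
        fix \<xi>
        have "norm (fourier f \<xi> * complex_of_real (g \<xi>)) = cmod (fourier f \<xi>) * g \<xi>"
          by (simp add: norm_mult g_def)
        also have "\<dots> \<le> C0 * g \<xi>" using FC0 by (intro mult_right_mono) (auto simp: g_def)
        also have "\<dots> \<le> norm (C0 * g \<xi>)" by simp
        finally show "norm (fourier f \<xi> * complex_of_real (g \<xi>)) \<le> norm (C0 * g \<xi>)" .
      qed
    qed
    have iH: "integrable lborel (\<lambda>\<xi>. sqrt (4 + \<xi>^2) * (cmod (fourier f \<xi>))^2)"
      by (rule H_integrable[OF n1 n2])
    have ih2: "integrable lborel (\<lambda>\<xi>. exp (- (\<sigma>^2 * \<xi>^2)) / sqrt (4 + \<xi>^2))"
    proof (rule Bochner_Integration.integrable_bound[OF gauss2_integrable[OF \<sigma>]])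
      show "(\<lambda>\<xi>. exp (- (\<sigma>^2 * \<xi>^2)) / sqrt (4 + \<xi>^2)) \<in> borel_measurable lborel" by measurable
      show "AE \<xi> in lborel. norm (exp (- (\<sigma>^2 * \<xi>^2)) / sqrt (4 + \<xi>^2)) \<le> norm (exp (- (\<sigma>^2 * \<xi>^2)))"
      proof (rule AE_I2)
        fix \<xi> :: real
        have "1 \<le> sqrt (4 + \<xi>^2)" by (simp add: real_le_rsqrt)
        then show "norm (exp (- (\<sigma>^2 * \<xi>^2)) / sqrt (4 + \<xi>^2)) \<le> norm (exp (- (\<sigma>^2 * \<xi>^2)))"
          by (simp add: divide_le_eq)
      qed
    qed
    have pw: "norm (fourier f \<xi> * complex_of_real (g \<xi>)) \<le> t/2 * (sqrt (4 + \<xi>^2) * (cmod (fourier f \<xi>))^2)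
                + 1/(2*t) * (exp (- (\<sigma>^2 * \<xi>^2)) / sqrt (4 + \<xi>^2))" for \<xi>
    proof -
      have w: "sqrt (4 + \<xi>^2) > 0" by (simp add: add_pos_nonneg)
      have gg: "g \<xi> ^ 2 = exp (- (\<sigma>^2 * \<xi>^2))" unfolding g_def by (simp add: power2_eq_square exp_add[symmetric])
      have "norm (fourier f \<xi> * complex_of_real (g \<xi>)) = cmod (fourier f \<xi>) * g \<xi>"
        by (simp add: norm_mult g_def)
      also have "\<dots> \<le> t/2 * (sqrt (4 + \<xi>^2) * (cmod (fourier f \<xi>))^2) + 1/(2*t) * (g \<xi> ^ 2 / sqrt (4 + \<xi>^2))"
        using w tp by (intro amgm) (auto simp: g_def)
      finally show ?thesis unfolding gg .
    qed
    have "cmod I \<le> (LINT \<xi>|lborel. t/2 * (sqrt (4 + \<xi>^2) * (cmod (fourier f \<xi>))^2)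
                + 1/(2*t) * (exp (- (\<sigma>^2 * \<xi>^2)) / sqrt (4 + \<xi>^2)))"
      unfolding I_def
      by (rule Bochner_Integration.integral_norm_bound_integral[OF iFg _ pw])
         (intro Bochner_Integration.integrable_add integrable_mult_right iH ih2)
    also have "\<dots> = t/2 * Hs + 1/(2*t) * (LINT \<xi>|lborel. exp (- (\<sigma>^2 * \<xi>^2)) / sqrt (4 + \<xi>^2))"
      unfolding Hs_def'
      by (simp only: Bochner_Integration.integral_add[OF integrable_mult_right[OF iH] integrable_mult_right[OF ih2]]
          integral_mult_right_zero)
    also have "\<dots> \<le> t/2 * Hs + 1/(2*t) * Bb"
      using BB tp by (intro add_left_mono mult_left_mono) auto
    finally have "A \<le> t/2 * Hs + 1/(2*t) * Bb" using IA by linarith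
    then have "A \<le> Bb / (2*A) * Hs + A / 2" unfolding t_def using Ap Bb by (simp add: field_simps)
    then have "A / 2 \<le> Bb / (2*A) * Hs" by linarith
    then have "A * A \<le> Bb * Hs" using Ap by (simp add: field_simps)
    then have "A^2 / Bb \<le> Hs" using Bb by (simp add: field_simps power2_eq_square)
    moreover have "A^2 = 2*pi*(cmod (f 0) - L*\<sigma>)^2" unfolding A_def by (simp add: power_mult_distrib)
    ultimately show ?thesis unfolding Hs_def by simp
  qed
qed

definition Fa :: "real \<Rightarrow> real" where "Fa x = ln (x + sqrt (x^2 + 4))"

lemma pos4a: "(0::real) < x^2 + 4" using zero_le_power2[of x] by linarith
lemma pos4b: "(0::real) < 4 + x^2" using zero_le_power2[of x] by linarith
lemma pos4c: "4 + x^2 \<noteq> (0::real)" using zero_le_power2[of x] by linarith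
lemmas pos4 = pos4a pos4b pos4c

lemma sqrt_gt_abs: "sqrt (x^2 + 4) > \<bar>x\<bar>"
proof -
  have "x^2 < x^2 + 4" by simp
  then have "sqrt (x^2) < sqrt (x^2 + 4)" by (rule real_sqrt_less_mono)
  then show ?thesis by simp
qed

lemma Fa_pos: "x + sqrt (x^2 + 4) > 0"
  using sqrt_gt_abs[of x] by linarith

lemma DERIV_Fa: "(Fa has_real_derivative 1 / sqrt (4 + x^2)) (at x)"
proof -
  have s: "sqrt (x^2 + 4) > 0" using pos4a[of x] by simp
  have p: "x + sqrt (x^2 + 4) > 0" by (rule Fa_pos)
  have "(Fa has_real_derivative (1 + inverse (sqrt (x^2 + 4)) / 2 * (2 * x)) / (x + sqrt (x^2 + 4))) (at x)"
    unfolding Fa_def[abs_def] using s p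
    by (auto intro!: derivative_eq_intros simp: power2_eq_square)
  moreover have "(1 + inverse (sqrt (x^2 + 4)) / 2 * (2 * x)) / (x + sqrt (x^2 + 4)) = 1 / sqrt (4 + x^2)"
  proof -
    have "1 + inverse (sqrt (x^2 + 4)) / 2 * (2 * x) = (x + sqrt (x^2 + 4)) / sqrt (x^2 + 4)"
      using s by (simp add: field_simps)
    then show ?thesis using s p by (simp add: add.commute)
  qed
  ultimately show ?thesis by simp
qed

lemma Bprime_bound:
  fixes \<sigma> :: real
  assumes \<sigma>: "\<sigma> > 0"
  shows "(LINT \<xi>|lborel. exp (- (\<sigma>^2 * \<xi>^2)) / sqrt (4 + \<xi>^2)) \<le> (Fa (1/\<sigma>) - Fa (-(1/\<sigma>))) + sqrt pi"
proof -
  define K where "K = 1/\<sigma>"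
  have K: "K > 0" unfolding K_def using \<sigma> by simp
  have h1: "has_bochner_integral lborel (\<lambda>x. 1 / sqrt (4 + x^2) * indicator {-K .. K} x) (Fa K - Fa (-K))"
    by (rule has_bochner_integral_FTC_Icc_real) (use K DERIV_Fa in \<open>auto intro!: continuous_intros simp: pos4\<close>)
  have i2: "integrable lborel (\<lambda>\<xi>. exp (- (\<sigma>^2 * \<xi>^2)))" by (rule gauss2_integrable[OF \<sigma>])
  have v2: "(LINT \<xi>|lborel. exp (- (\<sigma>^2 * \<xi>^2))) = sqrt pi / \<sigma>"
  proof -
    have e: "- (\<sigma>^2 * \<xi>^2) = - (\<xi>^2) / (2 * (1 / (sqrt 2 * \<sigma>))^2)" for \<xi> :: real
      using \<sigma> by (simp add: power_divide power_mult_distrib field_simps)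
    have "(LINT \<xi>|lborel. exp (- (\<sigma>^2 * \<xi>^2))) = sqrt (2*pi) * (1 / (sqrt 2 * \<sigma>))"
      unfolding e using gauss_integrable(2)[of "1 / (sqrt 2 * \<sigma>)"] \<sigma> by simp
    also have "\<dots> = sqrt pi / \<sigma>" by (simp add: real_sqrt_mult)
    finally show ?thesis .
  qed
  define G where "G \<xi> = 1 / sqrt (4 + \<xi>^2) * indicator {-K .. K} \<xi> + \<sigma> * exp (- (\<sigma>^2 * \<xi>^2))" for \<xi>
  have Gi: "integrable lborel G" unfolding G_def
    by (rule Bochner_Integration.integrable_add[OF integrable.intros[OF h1] integrable_mult_right[OF i2]])
  have Gv: "(LINT \<xi>|lborel. G \<xi>) = (Fa K - Fa (-K)) + sqrt pi"
  proof -
    have "(LINT \<xi>|lborel. G \<xi>) = (Fa K - Fa (-K)) + \<sigma> * (sqrt pi / \<sigma>)"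
      unfolding G_def
      by (simp only: Bochner_Integration.integral_add[OF integrable.intros[OF h1] integrable_mult_right[OF i2]]
         integral_mult_right_zero has_bochner_integral_integral_eq[OF h1] v2)
    then show ?thesis using \<sigma> by simp
  qed
  have ih2: "integrable lborel (\<lambda>\<xi>. exp (- (\<sigma>^2 * \<xi>^2)) / sqrt (4 + \<xi>^2))"
  proof (rule Bochner_Integration.integrable_bound[OF i2])
    show "(\<lambda>\<xi>. exp (- (\<sigma>^2 * \<xi>^2)) / sqrt (4 + \<xi>^2)) \<in> borel_measurable lborel" by measurable
    show "AE \<xi> in lborel. norm (exp (- (\<sigma>^2 * \<xi>^2)) / sqrt (4 + \<xi>^2)) \<le> norm (exp (- (\<sigma>^2 * \<xi>^2)))"
    proof (rule AE_I2)
      fix \<xi> :: real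
      have "1 \<le> sqrt (4 + \<xi>^2)" by (simp add: real_le_rsqrt)
      then show "norm (exp (- (\<sigma>^2 * \<xi>^2)) / sqrt (4 + \<xi>^2)) \<le> norm (exp (- (\<sigma>^2 * \<xi>^2)))"
        by (simp add: divide_le_eq)
    qed
  qed
  have pw: "exp (- (\<sigma>^2 * \<xi>^2)) / sqrt (4 + \<xi>^2) \<le> G \<xi>" for \<xi>
  proof (cases "\<bar>\<xi>\<bar> \<le> K")
    case True
    have "exp (- (\<sigma>^2 * \<xi>^2)) \<le> 1" by simp
    then have "exp (- (\<sigma>^2 * \<xi>^2)) / sqrt (4 + \<xi>^2) \<le> 1 / sqrt (4 + \<xi>^2)"
      by (intro divide_right_mono) auto
    moreover have "indicator {-K .. K} \<xi> = (1::real)" using True by (simp add: indicator_def abs_le_iff)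
    moreover have "0 \<le> \<sigma> * exp (- (\<sigma>^2 * \<xi>^2))" using \<sigma> by simp
    ultimately show ?thesis unfolding G_def by simp
  next
    case False
    have ax: "\<bar>\<xi>\<bar> > K" using False by simp
    have "sqrt (4 + \<xi>^2) \<ge> sqrt (\<xi>^2)" by (intro real_sqrt_le_mono) simp
    then have sq: "sqrt (4 + \<xi>^2) \<ge> \<bar>\<xi>\<bar>" by simp
    have "1 / sqrt (4 + \<xi>^2) \<le> 1 / \<bar>\<xi>\<bar>" using sq ax K pos4b[of \<xi>] by (intro divide_left_mono mult_pos_pos) auto
    also have "1 / \<bar>\<xi>\<bar> \<le> 1 / K" using ax K by (intro divide_left_mono) auto
    also have "1 / K = \<sigma>" unfolding K_def by simp
    finally have "1 / sqrt (4 + \<xi>^2) \<le> \<sigma>" .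
    then have "exp (- (\<sigma>^2 * \<xi>^2)) * (1 / sqrt (4 + \<xi>^2)) \<le> exp (- (\<sigma>^2 * \<xi>^2)) * \<sigma>"
      by (intro mult_left_mono) auto
    moreover have "indicator {-K .. K} \<xi> = (0::real)" using False by (auto simp: indicator_def abs_le_iff)
    ultimately show ?thesis unfolding G_def by (simp add: mult.commute)
  qed
  have "(LINT \<xi>|lborel. exp (- (\<sigma>^2 * \<xi>^2)) / sqrt (4 + \<xi>^2)) \<le> (LINT \<xi>|lborel. G \<xi>)"
    by (rule integral_mono[OF ih2 Gi pw])
  then show ?thesis unfolding Gv K_def .
qed

lemma sech_tendsto:
  assumes c: "c > 0"
  shows "((\<lambda>x. sech (c*x)) \<longlongrightarrow> 0) at_top" "((\<lambda>x. sech (c*x)) \<longlongrightarrow> 0) at_bot"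
proof -
  have "filterlim (\<lambda>x. c*x) at_top at_top"
    using c by (auto intro!: filterlim_tendsto_pos_mult_at_top filterlim_ident)
  then have "filterlim (\<lambda>x. cosh (c*x)) at_top at_top" by (rule filterlim_compose[OF cosh_real_at_top])
  then have "((\<lambda>x. inverse (cosh (c*x))) \<longlongrightarrow> 0) at_top" by (rule tendsto_inverse_0_at_top)
  then show "((\<lambda>x. sech (c*x)) \<longlongrightarrow> 0) at_top" by (simp add: sech_def inverse_eq_divide)
  have "filterlim (\<lambda>x. c*x) at_bot at_bot"
    using c by (auto intro!: filterlim_tendsto_pos_mult_at_bot filterlim_ident)
  then have "filterlim (\<lambda>x. cosh (c*x)) at_top at_bot" by (rule filterlim_compose[OF cosh_real_at_bot])
  then have "((\<lambda>x. inverse (cosh (c*x))) \<longlongrightarrow> 0) at_bot" by (rule tendsto_inverse_0_at_top)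
  then show "((\<lambda>x. sech (c*x)) \<longlongrightarrow> 0) at_bot" by (simp add: sech_def inverse_eq_divide)
qed

lemma sol_cont_x: "continuous_on UNIV (sol b t)"
  by (rule continuous_on_vector_derivative) (rule has_vector_derivative_at_within[OF sol_dx])

lemma PCsol:
  assumes b: "b > 0" and g: "g \<in> PC"
  shows "integrable lborel (\<lambda>x. g x * sol b t x)" "((\<lambda>x. g x * sol b t x) \<longlongrightarrow> 0) at_top"
    "((\<lambda>x. g x * sol b t x) \<longlongrightarrow> 0) at_bot" "continuous_on UNIV (\<lambda>x. g x * sol b t x)"
proof -
  obtain M where M: "\<And>x. cmod (g x) \<le> M" using PC_bounded[OF g] by blast
  have M0: "M \<ge> 0" using M[of 0] norm_ge_zero[of "g 0"] by linarith
  have bd: "norm (g x * sol b t x) \<le> M * sqrt (2*b) * sech ((b/2)*x)" for x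
  proof -
    have "norm (g x * sol b t x) = cmod (g x) * cmod (sol b t x)" by (simp add: norm_mult)
    also have "\<dots> \<le> M * (sqrt (2*b) * sech ((b/2)*x))"
      using b M0 by (intro mult_mono M sol_bound) auto
    finally show ?thesis by (simp add: mult_ac)
  qed
  show c: "continuous_on UNIV (\<lambda>x. g x * sol b t x)"
    by (intro continuous_intros PC_cont[OF g] sol_cont_x)
  have si: "integrable lborel (\<lambda>x. sech ((b/2)*x))" using sech_integral(1)[of "b/2"] b by simp
  show "integrable lborel (\<lambda>x. g x * sol b t x)"
  proof (rule Bochner_Integration.integrable_bound[OF integrable_mult_right[OF si, of "M * sqrt (2*b)"]])
    show "(\<lambda>x. g x * sol b t x) \<in> borel_measurable lborel" by (rule cont_meas[OF c])
    show "AE x in lborel. norm (g x * sol b t x) \<le> norm (M * sqrt (2*b) * sech ((b/2)*x))"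
    proof (rule AE_I2)
      fix x
      have "0 \<le> M * sqrt (2*b) * sech ((b/2)*x)" using M0 b sech_pos[of "(b/2)*x"] by simp
      then have "norm (M * sqrt (2*b) * sech ((b/2)*x)) = M * sqrt (2*b) * sech ((b/2)*x)"
        by (simp only: real_norm_def abs_of_nonneg)
      then show "norm (g x * sol b t x) \<le> norm (M * sqrt (2*b) * sech ((b/2)*x))" using bd[of x] by simp
    qed
  qed
  have b2: "b/2 > 0" using b by simp
  show "((\<lambda>x. g x * sol b t x) \<longlongrightarrow> 0) at_top"
    by (rule Lim_null_comparison[OF always_eventually[OF allI[OF bd]]])
       (use tendsto_mult_right_zero[OF sech_tendsto(1)[OF b2]] in simp)
  show "((\<lambda>x. g x * sol b t x) \<longlongrightarrow> 0) at_bot"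
    by (rule Lim_null_comparison[OF always_eventually[OF allI[OF bd]]])
       (use tendsto_mult_right_zero[OF sech_tendsto(2)[OF b2]] in simp)
qed

lemma nice_PC:
  assumes b: "b > 0" and h: "h \<in> PC" and h': "h' \<in> PC" and dh: "\<And>x. (h has_vector_derivative h' x) (at x)"
  shows "nice (\<lambda>x. h x * sol b t x) (\<lambda>x. (h' x + h x * mm b x) * sol b t x)"
proof -
  have h1: "(\<lambda>x. h' x + h x * mm b x) \<in> PC" by (rule PC.PC_add[OF h' PC.PC_mult[OF h mm_PC]])
  have d: "((\<lambda>x. h x * sol b t x) has_vector_derivative (h' x + h x * mm b x) * sol b t x) (at x)" for x
    by (rule has_vector_derivative_eq_rhs[OF has_vector_derivative_mult[OF dh sol_dx]]) (simp add: algebra_simps)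
  show ?thesis unfolding nice_def using d PCsol[OF b h] PCsol[OF b h1] by auto
qed

definition h0 :: "real \<Rightarrow> complex" where "h0 x = complex_of_real (sech x ^ 12)"
definition h0' :: "real \<Rightarrow> complex" where "h0' x = complex_of_real (-12 * tanh x * sech x ^ 12)"
definition h1 :: "real \<Rightarrow> real \<Rightarrow> complex" where "h1 b x = h0' x + h0 x * mm b x"

lemma h0_PC: "h0 \<in> PC"
proof -
  have "(\<lambda>x. complex_of_real (sech (1*x)) ^ 12) \<in> PC" by (rule PC_pow[OF PC.PC_sech])
  moreover have "h0 = (\<lambda>x. complex_of_real (sech (1*x)) ^ 12)" by (auto simp: h0_def fun_eq_iff)
  ultimately show ?thesis by simp
qed

lemma h0'_PC: "h0' \<in> PC"
proof -
  have "(\<lambda>x. complex_of_real (-12) * complex_of_real (tanh (1*x)) * complex_of_real (sech (1*x)) ^ 12) \<in> PC"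
    by (rule PC.PC_mult[OF PC.PC_mult[OF PC.PC_const PC.PC_tanh] PC_pow[OF PC.PC_sech]])
  moreover have "h0' = (\<lambda>x. complex_of_real (-12) * complex_of_real (tanh (1*x)) * complex_of_real (sech (1*x)) ^ 12)"
    by (auto simp: h0'_def fun_eq_iff)
  ultimately show ?thesis by simp
qed

lemma h1_PC: "h1 b \<in> PC"
proof -
  have "(\<lambda>x. h0' x + h0 x * mm b x) \<in> PC" by (rule PC.PC_add[OF h0'_PC PC.PC_mult[OF h0_PC mm_PC]])
  then show ?thesis unfolding h1_def[abs_def] .
qed

lemma DERIV_sech1: "((\<lambda>x. sech x) has_real_derivative (- tanh x * sech x)) (at x)"
  using DERIV_sech[of 1 x] by simp

lemma dh0: "(h0 has_vector_derivative h0' x) (at x)"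
proof -
  have d: "((\<lambda>x. sech x ^ 12) has_real_derivative (real 12 * sech x ^ (12 - Suc 0)) * (- tanh x * sech x)) (at x)"
    by (rule DERIV_chain2[OF DERIV_pow DERIV_sech1])
  have p12: "sech x ^ 12 = sech x ^ 11 * sech x" using power_add[of "sech x" 11 1] by simp
  have "(real 12 * sech x ^ (12 - Suc 0)) * (- tanh x * sech x) = -12 * tanh x * (sech x ^ 11 * sech x)"
    by (simp add: mult_ac)
  also have "\<dots> = -12 * tanh x * sech x ^ 12" by (simp only: p12[symmetric])
  finally have eq: "(real 12 * sech x ^ (12 - Suc 0)) * (- tanh x * sech x) = -12 * tanh x * sech x ^ 12" .
  have "((\<lambda>x. sech x ^ 12) has_real_derivative -12 * tanh x * sech x ^ 12) (at x)"
    using d unfolding eq .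
  then show ?thesis unfolding h0_def[abs_def] h0'_def by (rule has_vector_derivative_of_real)
qed

lemma cmod_mm: "b \<ge> 0 \<Longrightarrow> cmod (mm b x) \<le> 2*b"
proof -
  assume b: "b \<ge> 0"
  have "cmod (mm b x) \<le> cmod (complex_of_real (-(b/2) * tanh (b*x))) + cmod (\<i> * complex_of_real (3*b/2 * sech (b*x)))"
    unfolding mm_def by (rule norm_triangle_ineq4)
  also have "\<dots> = b/2 * \<bar>tanh (b*x)\<bar> + 3*b/2 * sech (b*x)"
    using b by (simp add: norm_mult abs_mult sech_pos less_imp_le)
  also have "\<dots> \<le> b/2 * 1 + 3*b/2 * 1"
    using b by (intro add_mono mult_left_mono tanh_abs_le1 sech_le1) auto
  finally show ?thesis by simp
qed

lemma cmod_h1: "b \<ge> 0 \<Longrightarrow> cmod (h1 b x) \<le> 12 + 2*b"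
proof -
  assume b: "b \<ge> 0"
  have s0: "0 \<le> sech x" "sech x \<le> 1" using sech_pos[of x] sech_le1[of x] by auto
  have s12: "sech x ^ 12 \<le> 1" using s0 by (simp add: power_le_one)
  have s12': "0 \<le> sech x ^ 12" using s0 by simp
  have "cmod (h1 b x) \<le> cmod (h0' x) + cmod (h0 x * mm b x)" unfolding h1_def by (rule norm_triangle_ineq)
  also have "cmod (h0' x) = 12 * \<bar>tanh x\<bar> * sech x ^ 12"
    unfolding h0'_def norm_of_real using s12' by (simp add: abs_mult)
  also have "\<dots> \<le> 12 * 1 * 1" using s12 s12' tanh_abs_le1[of x] by (intro mult_mono) auto
  also have "cmod (h0 x * mm b x) = sech x ^ 12 * cmod (mm b x)"
    by (simp only: h0_def norm_mult norm_of_real abs_of_nonneg[OF s12'])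
  also have "\<dots> \<le> 1 * (2*b)" using s12 s12' cmod_mm[OF b] by (intro mult_mono) auto
  finally show ?thesis by simp
qed

lemma uu_le: "b \<ge> 0 \<Longrightarrow> uu b x \<le> sqrt (2*b)"
proof -
  assume b: "b \<ge> 0"
  have "sqrt (sech (b*x)) \<le> 1" using sech_le1 by simp
  then have "sqrt (2*b) * sqrt (sech (b*x)) \<le> sqrt (2*b) * 1" using b by (intro mult_left_mono) auto
  then show ?thesis by (simp add: uu_def)
qed

lemma sol_phase: "sol b t x = exp (\<i> * complex_of_real (b^2/4 * t)) * sol b 0 x"
  by (simp add: sol_def exp_add[symmetric] distrib_left algebra_simps)

lemma H_phase:
  assumes c: "cmod c = 1"
  shows "H_half_norm_sq (\<lambda>x. c * f x) = H_half_norm_sq f"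
proof -
  have "fourier (\<lambda>x. c * f x) \<xi> = c * fourier f \<xi>" for \<xi>
  proof -
    have "(LINT x|lborel. cis (- (x * \<xi>)) * (c * f x)) = c * (LINT x|lborel. cis (- (x * \<xi>)) * f x)"
      by (subst integral_mult_right_zero[symmetric]) (simp add: mult_ac)
    then show ?thesis unfolding fourier_def by (simp add: mult_ac)
  qed
  then show ?thesis unfolding H_half_norm_sq_def by (simp add: norm_mult c)
qed

lemma Fa_mono: "K > 0 \<Longrightarrow> Fa (-K) < Fa K"
proof -
  assume K: "K > 0"
  have p1: "-K + sqrt ((-K)^2 + 4) > 0" by (rule Fa_pos)
  have "-K + sqrt ((-K)^2 + 4) < K + sqrt (K^2 + 4)" using K by simp
  then show ?thesis unfolding Fa_def using p1 by simp
qed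

lemma main_bound:
  assumes b: "b > 0"
  shows "pi * b / (Fa (2*(12+2*b)) - Fa (-(2*(12+2*b))) + sqrt pi)
     \<le> H_half_norm_sq (\<lambda>x. complex_of_real (sech x ^ 12) * sol b 0 x)"
proof -
  define f0 where "f0 = (\<lambda>x. h0 x * sol b 0 x)"
  define f1 where "f1 = (\<lambda>x. (h0' x + h0 x * mm b x) * sol b 0 x)"
  obtain h1' where h1': "h1' \<in> PC" "\<And>x. (h1 b has_vector_derivative h1' x) (at x)"
    using PC_deriv[OF h1_PC[of b]] by blast
  have n1: "nice f0 f1" unfolding f0_def f1_def by (rule nice_PC[OF b h0_PC h0'_PC dh0])
  have n2: "nice f1 (\<lambda>x. (h1' x + h1 b x * mm b x) * sol b 0 x)"
  proof -
    have "nice (\<lambda>x. h1 b x * sol b 0 x) (\<lambda>x. (h1' x + h1 b x * mm b x) * sol b 0 x)"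
      by (rule nice_PC[OF b h1_PC h1'])
    moreover have "(\<lambda>x. h1 b x * sol b 0 x) = f1" unfolding f1_def h1_def ..
    ultimately show ?thesis by simp
  qed
  define L where "L = (12 + 2*b) * sqrt (2*b)"
  define \<sigma> where "\<sigma> = 1 / (2*(12+2*b))"
  have \<sigma>: "\<sigma> > 0" unfolding \<sigma>_def using b by simp
  have L: "cmod (f1 x) \<le> L" for x
  proof -
    have "cmod (f1 x) = cmod (h1 b x) * uu b x"
      unfolding f1_def h1_def[symmetric] using b by (simp add: norm_mult cmod_sol)
    also have "\<dots> \<le> (12 + 2*b) * sqrt (2*b)"
      using b uu_nonneg[of b x] by (intro mult_mono cmod_h1 uu_le) auto
    finally show ?thesis unfolding L_def .
  qed
  have f00: "cmod (f0 0) = sqrt (2*b)"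
    using b by (simp add: f0_def h0_def norm_mult cmod_sol uu_def sech_def)
  have Ls: "L * \<sigma> = sqrt (2*b) / 2" unfolding L_def \<sigma>_def using b by (simp add: field_simps)
  define Bb where "Bb = Fa (1/\<sigma>) - Fa (-(1/\<sigma>)) + sqrt pi"
  have Bb: "Bb > 0"
  proof -
    have "Fa (-(1/\<sigma>)) < Fa (1/\<sigma>)" using Fa_mono[of "1/\<sigma>"] \<sigma> by simp
    moreover have "sqrt pi > 0" by simp
    ultimately show ?thesis unfolding Bb_def by linarith
  qed
  have H1: "2*pi*(cmod (f0 0) - L*\<sigma>)^2 / Bb \<le> H_half_norm_sq f0"
  proof -
    have A0: "L*\<sigma> \<le> cmod (f0 0)" unfolding Ls f00 using b by simp
    show ?thesis by (rule H_lower[OF n1 n2 \<sigma> L A0 Bb]) (unfold Bb_def, rule Bprime_bound[OF \<sigma>])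
  qed
  have eqn: "2*pi*(cmod (f0 0) - L*\<sigma>)^2 = pi * b"
  proof -
    have "cmod (f0 0) - L*\<sigma> = sqrt (2*b) / 2" using f00 Ls by simp
    then have "(cmod (f0 0) - L*\<sigma>)^2 = (sqrt (2*b) / 2)^2" by (simp only:)
    also have "\<dots> = (2*b) / 4" using b by (simp add: power_divide)
    finally have "(cmod (f0 0) - L*\<sigma>)^2 = (2*b) / 4" .
    then show ?thesis by simp
  qed
  have si: "1/\<sigma> = 2*(12+2*b)" unfolding \<sigma>_def by simp
  have "pi * b / Bb \<le> H_half_norm_sq f0" using H1 unfolding eqn .
  then show ?thesis unfolding Bb_def si f0_def h0_def .
qed

lemma time_integral:
  assumes b: "b > 0"
  shows "(LBINT t=-1..1. H_half_norm_sq (\<lambda>x. complex_of_real (sech x ^ 12) * sol b t x))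
       = 2 * H_half_norm_sq (\<lambda>x. complex_of_real (sech x ^ 12) * sol b 0 x)"
proof -
  define c where "c = H_half_norm_sq (\<lambda>x. complex_of_real (sech x ^ 12) * sol b 0 x)"
  have eqt: "H_half_norm_sq (\<lambda>x. complex_of_real (sech x ^ 12) * sol b t x) = c" for t
  proof -
    have "(\<lambda>x. complex_of_real (sech x ^ 12) * sol b t x)
        = (\<lambda>x. exp (\<i> * complex_of_real (b^2/4 * t)) * (complex_of_real (sech x ^ 12) * sol b 0 x))"
      by (subst sol_phase) (simp add: mult_ac)
    moreover have "cmod (exp (\<i> * complex_of_real (b^2/4 * t))) = 1" by simp
    ultimately show ?thesis unfolding c_def using H_phase by simp
  qed
  have eq: "(\<lambda>t. H_half_norm_sq (\<lambda>x. complex_of_real (sech x ^ 12) * sol b t x)) = (\<lambda>t. c)"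
    by (rule ext) (rule eqt)
  have "(LBINT t=-1..1. H_half_norm_sq (\<lambda>x. complex_of_real (sech x ^ 12) * sol b t x)) = (LBINT t=-1..1. c)"
    by (simp only: eq)
  also have "\<dots> = (LBINT t=ereal (-1)..ereal 1. c)" by (simp add: one_ereal_def)
  also have "\<dots> = c * (1 - (-1))" by (rule interval_integral_const)
  also have "\<dots> = 2 * c" by simp
  finally show ?thesis unfolding c_def .
qed

lemma asymp_final:
  "filterlim (\<lambda>n::nat. 2 * (pi * (real n + 1) / (Fa (2*(12+2*(real n + 1))) - Fa (-(2*(12+2*(real n + 1)))) + sqrt pi)))
     at_top sequentially"
  unfolding Fa_def by real_asymp

theorem proposition1p10:
  shows "\<exists>q :: nat \<Rightarrow> real \<Rightarrow> real \<Rightarrow> complex.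
     (\<forall>n. dnls_schwartz_solution (q n)) \<and>
     (\<forall>n t. (LINT x|lborel. (cmod (q n t x))\<^sup>2) = 2 * pi) \<and>
     filterlim (\<lambda>n. LBINT t=-1..1.
                   H_half_norm_sq (\<lambda>x. complex_of_real (sech x ^ 12) * q n t x))
               at_top sequentially"
proof (intro exI[of _ "\<lambda>n. sol (real n + 1)"] conjI allI)
  fix n :: nat
  have b: "real n + 1 > 0" by simp
  show "dnls_schwartz_solution (sol (real n + 1))" by (rule sol_dnls[OF b])
next
  fix n :: nat and t :: real
  have b: "real n + 1 > 0" by simp
  show "(LINT x|lborel. (cmod (sol (real n + 1) t x))\<^sup>2) = 2 * pi" by (rule sol_mass[OF b])
next
  show "filterlim (\<lambda>n. LBINT t=-1..1. H_half_norm_sq (\<lambda>x. complex_of_real (sech x ^ 12) * sol (real n + 1) t x))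
     at_top sequentially"
  proof (rule filterlim_at_top_mono[OF asymp_final])
    show "\<forall>\<^sub>F n in sequentially. 2 * (pi * (real n + 1) / (Fa (2*(12+2*(real n + 1))) - Fa (-(2*(12+2*(real n + 1)))) + sqrt pi))
        \<le> (LBINT t=-1..1. H_half_norm_sq (\<lambda>x. complex_of_real (sech x ^ 12) * sol (real n + 1) t x))"
    proof (rule always_eventually, rule allI)
      fix n :: nat
      have b: "real n + 1 > 0" by simp
      show "2 * (pi * (real n + 1) / (Fa (2*(12+2*(real n + 1))) - Fa (-(2*(12+2*(real n + 1)))) + sqrt pi))
        \<le> (LBINT t=-1..1. H_half_norm_sq (\<lambda>x. complex_of_real (sech x ^ 12) * sol (real n + 1) t x))"
        unfolding time_integral[OF b] using main_bound[OF b] by simp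
    qed
  qed
qed

end
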